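(* Let $X=(X_1,\dots,X_d)$ be a non-degenerate $d$-dimensional $1$-Meixner random vector with $E[X_k]=0$ and $E[X_iX_j]=\delta_{i,j}$ for all $i,j,k$, so that $[U_i,X_j]=\sum_{k=1}^d\alpha_{i,j,k}X_k+\delta_{i,j}I$ for real numbers $\alpha_{i,j,k}$. Then the Laplace transform $\varphi(t_1,\dots,t_d):=E[\exp(t_1X_1+\cdots+t_dX_d)]$ satisfies, for all $\mathbf t$ in a neighborhood $V$ of $\mathbf 0$ and all $i\in\{1,\dots,d\}$, $$\frac{\partial\varphi}{\partial t_i}=\sum_{1\le j,k\le d}\alpha_{i,j,k}\,t_j\,\frac{\partial\varphi}{\partial t_k}+t_i\varphi .$$
   Context: Let $X_1,\dots,X_d$ be real random variables on $(\Omega,\mathcal F,P)$ with finite moments of all orders. $F$ is the space of polynomial random variables $f(X_1,\dots,X_d)$ (complex coefficients), $F_n$ those of degree $\le n$, $G_0=F_0$, $G_n=F_n\ominus F_{n-1}$ in $L^2(P)$. For $f\in G_n$, $X_if\in G_{n-1}\oplus G_n\oplus G_{n+1}$; its components define $a^-(i)f,a^0(i)f,a^+(i)f$ respectively, extended linearly to $F$. $U_i:=a^-(i)+\tfrac12a^0(i)$. $(X_1,\dots,X_d)$ is a $d$-dimensional $1$-Meixner random vector if there are reals $\alpha_{i,j,k},\beta_{i,j}$ with $[U_i,X_j]=\sum_k\alpha_{i,j,k}X_k+\beta_{i,j}I$ on $F$ for all $i,j$ (with $X_j$ the multiplication operator, $I$ the identity); it is non-degenerate if $I,X_1,\dots,X_d$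 are linearly independent operators on $F$. *)

theory Defs
  imports "HOL-Probability.Probability"
begin

text \<open>Random vector: X :: 'd \<Rightarrow> 'a \<Rightarrow> real, indexed by a finite type 'd (d = CARD('d)).
  Elements of L2(P) are identified a.e.; equalities of operators on F are stated a.e.\<close>

definition monomial_rv :: "('d::finite \<Rightarrow> 'a \<Rightarrow> real) \<Rightarrow> ('d \<Rightarrow> nat) \<Rightarrow> 'a \<Rightarrow> complex" where
  "monomial_rv X m = (\<lambda>\<omega>. complex_of_real (\<Prod>i\<in>UNIV. X i \<omega> ^ m i))"

definition mdeg :: "('d::finite \<Rightarrow> nat) \<Rightarrow> nat" where
  "mdeg m = (\<Sum>i\<in>UNIV. m i)"

definition polyF :: "('d::finite \<Rightarrow> 'a \<Rightarrow> real) \<Rightarrow> nat \<Rightarrow> ('a \<Rightarrow> complex) set" where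
  "polyF X n = {f. \<exists>S c. finite S \<and> (\<forall>m\<in>S. mdeg m \<le> n) \<and>
       f = (\<lambda>\<omega>. \<Sum>m\<in>S. c m * monomial_rv X m \<omega>)}"

definition polyAll :: "('d::finite \<Rightarrow> 'a \<Rightarrow> real) \<Rightarrow> ('a \<Rightarrow> complex) set" where
  "polyAll X = (\<Union>n. polyF X n)"

definition cinner :: "'a measure \<Rightarrow> ('a \<Rightarrow> complex) \<Rightarrow> ('a \<Rightarrow> complex) \<Rightarrow> complex" where
  "cinner M f g = integral\<^sup>L M (\<lambda>\<omega>. f \<omega> * cnj (g \<omega>))"

definition Gsp :: "'a measure \<Rightarrow> ('d::finite \<Rightarrow> 'a \<Rightarrow> real) \<Rightarrow> nat \<Rightarrow> ('a \<Rightarrow> complex) set" where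
  "Gsp M X n = (if n = 0 then polyF X 0
     else {f \<in> polyF X n. \<forall>g\<in>polyF X (n - 1). cinner M f g = 0})"

text \<open>Orthogonal projection onto G_n (a representative; unique up to a.e. equality).\<close>
definition projG :: "'a measure \<Rightarrow> ('d::finite \<Rightarrow> 'a \<Rightarrow> real) \<Rightarrow> nat \<Rightarrow> ('a \<Rightarrow> complex) \<Rightarrow> ('a \<Rightarrow> complex)" where
  "projG M X n f = (SOME g. g \<in> Gsp M X n \<and> (\<forall>h\<in>Gsp M X n. cinner M (\<lambda>\<omega>. f \<omega> - g \<omega>) h = 0))"

definition pdeg :: "('d::finite \<Rightarrow> 'a \<Rightarrow> real) \<Rightarrow> ('a \<Rightarrow> complex) \<Rightarrow> nat" where
  "pdeg X f = (LEAST n. f \<in> polyF X n)"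

definition mulX :: "('d::finite \<Rightarrow> 'a \<Rightarrow> real) \<Rightarrow> 'd \<Rightarrow> ('a \<Rightarrow> complex) \<Rightarrow> ('a \<Rightarrow> complex)" where
  "mulX X i f = (\<lambda>\<omega>. complex_of_real (X i \<omega>) * f \<omega>)"

text \<open>For g in G_n: a^-(i) g = component of X_i g in G_(n-1) (zero for n = 0),
  a^0(i) g = component in G_n, a^+(i) g = component in G_(n+1); extended linearly via
  f = sum over n of the G_n-components of f.\<close>
definition a_minus :: "'a measure \<Rightarrow> ('d::finite \<Rightarrow> 'a \<Rightarrow> real) \<Rightarrow> 'd \<Rightarrow> ('a \<Rightarrow> complex) \<Rightarrow> ('a \<Rightarrow> complex)" where
  "a_minus M X i f = (\<lambda>\<omega>. \<Sum>n\<le>pdeg X f.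
      if n = 0 then 0 else projG M X (n - 1) (mulX X i (projG M X n f)) \<omega>)"

definition a_zero :: "'a measure \<Rightarrow> ('d::finite \<Rightarrow> 'a \<Rightarrow> real) \<Rightarrow> 'd \<Rightarrow> ('a \<Rightarrow> complex) \<Rightarrow> ('a \<Rightarrow> complex)" where
  "a_zero M X i f = (\<lambda>\<omega>. \<Sum>n\<le>pdeg X f. projG M X n (mulX X i (projG M X n f)) \<omega>)"

definition Uop :: "'a measure \<Rightarrow> ('d::finite \<Rightarrow> 'a \<Rightarrow> real) \<Rightarrow> 'd \<Rightarrow> ('a \<Rightarrow> complex) \<Rightarrow> ('a \<Rightarrow> complex)" where
  "Uop M X i f = (\<lambda>\<omega>. a_minus M X i f \<omega> + a_zero M X i f \<omega> / 2)"

definition meixner1 :: "'a measure \<Rightarrow> ('d::finite \<Rightarrow> 'a \<Rightarrow> real) \<Rightarrow> ('d \<Rightarrow> 'd \<Rightarrow> 'd \<Rightarrow> real) \<Rightarrow> ('d \<Rightarrow> 'd \<Rightarrow> real) \<Rightarrow> bool" where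
  "meixner1 M X \<alpha> \<beta> \<longleftrightarrow> (\<forall>i j. \<forall>f\<in>polyAll X. AE \<omega> in M.
      Uop M X i (mulX X j f) \<omega> - mulX X j (Uop M X i f) \<omega>
      = (\<Sum>k\<in>UNIV. complex_of_real (\<alpha> i j k) * mulX X k f \<omega>) + complex_of_real (\<beta> i j) * f \<omega>)"

definition nondegenerate :: "'a measure \<Rightarrow> ('d::finite \<Rightarrow> 'a \<Rightarrow> real) \<Rightarrow> bool" where
  "nondegenerate M X \<longleftrightarrow> (\<forall>(c0::complex) c. (\<forall>f\<in>polyAll X. AE \<omega> in M.
      c0 * f \<omega> + (\<Sum>k\<in>UNIV. c k * mulX X k f \<omega>) = 0) \<longrightarrow> c0 = 0 \<and> (\<forall>k. c k = 0))"

definition laplace :: "'a measure \<Rightarrow> ('d::finite \<Rightarrow> 'a \<Rightarrow> real) \<Rightarrow> real^'d \<Rightarrow> real" where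
  "laplace M X t = integral\<^sup>L M (\<lambda>\<omega>. exp (\<Sum>k\<in>UNIV. t $ k * X k \<omega>))"

definition partial :: "(real^'d::finite \<Rightarrow> real) \<Rightarrow> 'd \<Rightarrow> real^'d \<Rightarrow> real" where
  "partial \<phi> i t = deriv (\<lambda>s. \<phi> (t + s *\<^sub>R axis i 1)) 0"

definition has_partial :: "(real^'d::finite \<Rightarrow> real) \<Rightarrow> 'd \<Rightarrow> real^'d \<Rightarrow> bool" where
  "has_partial \<phi> i t \<longleftrightarrow> (\<lambda>s. \<phi> (t + s *\<^sub>R axis i 1)) differentiable (at 0)"

end

theory Submission
  imports Defs
begin

inductive_set RP :: "('d \<Rightarrow> 'a \<Rightarrow> real) \<Rightarrow> ('a \<Rightarrow> real) set" for X where
  RPc: "(\<lambda>\<omega>. c) \<in> RP X"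
| RPX: "X k \<in> RP X"
| RPadd: "f \<in> RP X \<Longrightarrow> g \<in> RP X \<Longrightarrow> (\<lambda>\<omega>. f \<omega> + g \<omega>) \<in> RP X"
| RPmul: "f \<in> RP X \<Longrightarrow> g \<in> RP X \<Longrightarrow> (\<lambda>\<omega>. f \<omega> * g \<omega>) \<in> RP X"

lemma RP_sum: "finite A \<Longrightarrow> (\<And>a. a \<in> A \<Longrightarrow> F a \<in> RP X) \<Longrightarrow> (\<lambda>\<omega>. \<Sum>a\<in>A. F a \<omega>) \<in> RP X"
  by (induction A rule: finite_induct) (auto intro: RP.intros)

lemma RP_prod: "finite A \<Longrightarrow> (\<And>a. a \<in> A \<Longrightarrow> F a \<in> RP X) \<Longrightarrow> (\<lambda>\<omega>. \<Prod>a\<in>A. F a \<omega>) \<in> RP X"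
  by (induction A rule: finite_induct) (auto intro: RP.intros)

lemma RP_power: "f \<in> RP X \<Longrightarrow> (\<lambda>\<omega>. f \<omega> ^ n) \<in> RP X"
  by (induction n) (auto intro: RP.intros)

lemma RP_scale: "f \<in> RP X \<Longrightarrow> (\<lambda>\<omega>. c * f \<omega>) \<in> RP X"
  using RPmul[OF RPc] by blast

lemma RP_diff: "f \<in> RP X \<Longrightarrow> g \<in> RP X \<Longrightarrow> (\<lambda>\<omega>. f \<omega> - g \<omega>) \<in> RP X"
  using RPadd[OF _ RP_scale[of g X "-1"]] by simp

lemma RP_prod_list: "(\<lambda>\<omega>. prod_list (map (\<lambda>j. X j \<omega>) js)) \<in> RP X"
  by (induction js) (auto intro: RP.intros)

lemma RP_bound:
  fixes X :: "'d::finite \<Rightarrow> 'a \<Rightarrow> real"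
  assumes "f \<in> RP X"
  shows "\<exists>C n. \<forall>\<omega>. \<bar>f \<omega>\<bar> \<le> C * (1 + (\<Sum>k\<in>UNIV. \<bar>X k \<omega>\<bar>)) ^ n"
  using assms
proof induction
  case (RPc c)
  then show ?case by (intro exI[of _ "\<bar>c\<bar>"] exI[of _ 0]) auto
next
  case (RPX k)
  have "\<bar>X k \<omega>\<bar> \<le> 1 * (1 + (\<Sum>k\<in>UNIV. \<bar>X k \<omega>\<bar>)) ^ 1" for \<omega>
  proof -
    have "\<bar>X k \<omega>\<bar> \<le> (\<Sum>k\<in>UNIV. \<bar>X k \<omega>\<bar>)"
      by (rule member_le_sum) auto
    then show ?thesis by simp
  qed
  then show ?case by blast
next
  case (RPadd f g)
  then obtain C1 n1 C2 n2 where 1: "\<And>\<omega>. \<bar>f \<omega>\<bar> \<le> C1 * (1 + (\<Sum>k\<in>UNIV. \<bar>X k \<omega>\<bar>)) ^ n1"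
    and 2: "\<And>\<omega>. \<bar>g \<omega>\<bar> \<le> C2 * (1 + (\<Sum>k\<in>UNIV. \<bar>X k \<omega>\<bar>)) ^ n2" by blast
  have "\<bar>f \<omega> + g \<omega>\<bar> \<le> (\<bar>C1\<bar> + \<bar>C2\<bar>) * (1 + (\<Sum>k\<in>UNIV. \<bar>X k \<omega>\<bar>)) ^ (n1 + n2)" for \<omega>
  proof -
    define B where "B = 1 + (\<Sum>k\<in>UNIV. \<bar>X k \<omega>\<bar>)"
    have B1: "B \<ge> 1" unfolding B_def by (simp add: sum_nonneg)
    have a: "B ^ n1 \<le> B ^ (n1 + n2)" "B ^ n2 \<le> B ^ (n1 + n2)"
      using B1 by (auto intro: power_increasing)
    have "\<bar>f \<omega>\<bar> \<le> \<bar>C1\<bar> * B ^ (n1 + n2)"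
      using 1[of \<omega>] a B1 unfolding B_def[symmetric]
      by (smt (verit, best) abs_ge_self mult_mono zero_le_power)
    moreover have "\<bar>g \<omega>\<bar> \<le> \<bar>C2\<bar> * B ^ (n1 + n2)"
      using 2[of \<omega>] a B1 unfolding B_def[symmetric]
      by (smt (verit, best) abs_ge_self mult_mono zero_le_power)
    ultimately show ?thesis unfolding B_def[symmetric] by (simp add: distrib_right)
  qed
  then show ?case by blast
next
  case (RPmul f g)
  then obtain C1 n1 C2 n2 where 1: "\<And>\<omega>. \<bar>f \<omega>\<bar> \<le> C1 * (1 + (\<Sum>k\<in>UNIV. \<bar>X k \<omega>\<bar>)) ^ n1"
    and 2: "\<And>\<omega>. \<bar>g \<omega>\<bar> \<le> C2 * (1 + (\<Sum>k\<in>UNIV. \<bar>X k \<omega>\<bar>)) ^ n2" by blast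
  have "\<bar>f \<omega> * g \<omega>\<bar> \<le> (C1 * C2) * (1 + (\<Sum>k\<in>UNIV. \<bar>X k \<omega>\<bar>)) ^ (n1 + n2)" for \<omega>
  proof -
    have "\<bar>f \<omega> * g \<omega>\<bar> = \<bar>f \<omega>\<bar> * \<bar>g \<omega>\<bar>" by (simp add: abs_mult)
    also have "\<dots> \<le> (C1 * (1 + (\<Sum>k\<in>UNIV. \<bar>X k \<omega>\<bar>)) ^ n1) * (C2 * (1 + (\<Sum>k\<in>UNIV. \<bar>X k \<omega>\<bar>)) ^ n2)"
      by (rule mult_mono[OF 1 2]) (auto intro: order_trans[OF abs_ge_zero 1])
    finally show ?thesis by (simp add: power_add algebra_simps)
  qed
  then show ?case by blast
qed

lemma sum_pow_le:
  fixes a :: "'d::finite \<Rightarrow> real"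
  assumes "\<And>k. a k \<ge> 0"
  shows "(\<Sum>k\<in>UNIV. a k) ^ n \<le> real (CARD('d)) ^ n * (\<Sum>k\<in>UNIV. a k ^ n)"
proof -
  have "Max (range a) \<in> range a" by (rule Max_in) auto
  then obtain k0 where "a k0 = Max (range a)" by (metis imageE)
  hence k0: "\<And>k. a k \<le> a k0" by simp
  have "(\<Sum>k\<in>UNIV. a k) \<le> (\<Sum>k\<in>(UNIV::'d set). a k0)" by (rule sum_mono) (rule k0)
  also have "\<dots> = real (CARD('d)) * a k0" by simp
  finally have "(\<Sum>k\<in>UNIV. a k) ^ n \<le> (real (CARD('d)) * a k0) ^ n"
    by (intro power_mono) (auto intro: sum_nonneg assms)
  also have "\<dots> = real (CARD('d)) ^ n * a k0 ^ n" by (simp add: power_mult_distrib)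
  also have "a k0 ^ n \<le> (\<Sum>k\<in>UNIV. a k ^ n)"
    by (rule member_le_sum) (auto intro: assms zero_le_power)
  hence "real (CARD('d)) ^ n * a k0 ^ n \<le> real (CARD('d)) ^ n * (\<Sum>k\<in>UNIV. a k ^ n)"
    by (intro mult_left_mono) auto
  finally show ?thesis .
qed

locale mx = prob_space M for M :: "'a measure" +
  fixes X :: "'d::finite \<Rightarrow> 'a \<Rightarrow> real"
  assumes Xmeas: "\<And>i. X i \<in> borel_measurable M"
    and Xmom: "\<And>i n. integrable M (\<lambda>\<omega>. \<bar>X i \<omega>\<bar> ^ n)"
begin

lemma RP_meas: "f \<in> RP X \<Longrightarrow> f \<in> borel_measurable M"
  by (induction rule: RP.induct) (auto intro: Xmeas)

lemma int_B: "integrable M (\<lambda>\<omega>. (1 + (\<Sum>k\<in>UNIV. \<bar>X k \<omega>\<bar>)) ^ n)"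
proof -
  define d where "d = real (CARD('d))"
  have b: "(1 + (\<Sum>k\<in>UNIV. \<bar>X k \<omega>\<bar>)) ^ n \<le> 2 ^ n * (1 + d ^ n * (\<Sum>k\<in>UNIV. \<bar>X k \<omega>\<bar> ^ n))" for \<omega>
  proof -
    define S where "S = (\<Sum>k\<in>UNIV. \<bar>X k \<omega>\<bar>)"
    have S0: "S \<ge> 0" unfolding S_def by (simp add: sum_nonneg)
    have "(1 + S) ^ n \<le> (2 * max 1 S) ^ n" by (intro power_mono) (use S0 in auto)
    also have "\<dots> = 2 ^ n * max 1 S ^ n" by (simp add: power_mult_distrib)
    also have "max 1 S ^ n \<le> 1 + S ^ n"
      using S0 by (cases "S \<le> 1") (auto simp: max_def intro: power_le_one)
    hence "2 ^ n * max 1 S ^ n \<le> 2 ^ n * (1 + S ^ n)" by simp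
    also have "S ^ n \<le> d ^ n * (\<Sum>k\<in>UNIV. \<bar>X k \<omega>\<bar> ^ n)"
      unfolding S_def d_def by (rule sum_pow_le) auto
    hence "2 ^ n * (1 + S ^ n) \<le> 2 ^ n * (1 + d ^ n * (\<Sum>k\<in>UNIV. \<bar>X k \<omega>\<bar> ^ n))" by simp
    finally show ?thesis unfolding S_def .
  qed
  have i: "integrable M (\<lambda>\<omega>. 2 ^ n * (1 + d ^ n * (\<Sum>k\<in>UNIV. \<bar>X k \<omega>\<bar> ^ n)))"
    by (auto intro!: integrable_add integrable_mult_right integrable_sum Xmom)
  show ?thesis
    apply (rule Bochner_Integration.integrable_bound[OF i])
    using Xmeas apply measurable
    using b by (auto intro!: AE_I2 simp: sum_nonneg intro: order_trans[OF b abs_ge_self])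
qed

lemma RP_int: "f \<in> RP X \<Longrightarrow> integrable M f"
proof -
  assume f: "f \<in> RP X"
  from RP_bound[OF f] obtain C n where b: "\<And>\<omega>. \<bar>f \<omega>\<bar> \<le> C * (1 + (\<Sum>k\<in>UNIV. \<bar>X k \<omega>\<bar>)) ^ n" by blast
  show ?thesis
    apply (rule Bochner_Integration.integrable_bound[OF integrable_mult_right[OF int_B[of n], of C]])
     apply (rule RP_meas[OF f])
    using b by (auto intro!: AE_I2 intro: order_trans[OF _ abs_ge_self])
qed

end


definition Kn :: "nat \<Rightarrow> ('d::finite \<Rightarrow> nat) set" where
  "Kn n = {m. mdeg m \<le> n}"

definition mono_r :: "('d::finite \<Rightarrow> 'a \<Rightarrow> real) \<Rightarrow> ('d \<Rightarrow> nat) \<Rightarrow> 'a \<Rightarrow> real" where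
  "mono_r X m = (\<lambda>\<omega>. \<Prod>i\<in>UNIV. X i \<omega> ^ m i)"

definition PF :: "('d::finite \<Rightarrow> 'a \<Rightarrow> real) \<Rightarrow> nat \<Rightarrow> (('d \<Rightarrow> nat) \<Rightarrow> complex) \<Rightarrow> 'a \<Rightarrow> complex" where
  "PF X n c = (\<lambda>\<omega>. \<Sum>m\<in>Kn n. c m * monomial_rv X m \<omega>)"

lemma finite_Kn: "finite (Kn n :: ('d::finite \<Rightarrow> nat) set)"
proof -
  have "Kn n \<subseteq> PiE (UNIV::'d set) (\<lambda>_. {..n})"
  proof
    fix m :: "'d \<Rightarrow> nat" assume "m \<in> Kn n"
    hence "(\<Sum>i\<in>UNIV. m i) \<le> n" by (simp add: Kn_def mdeg_def)
    moreover have "m i \<le> (\<Sum>i\<in>UNIV. m i)" for i by (rule member_le_sum) auto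
    ultimately show "m \<in> PiE UNIV (\<lambda>_. {..n})" by (auto simp: PiE_def Pi_def extensional_def intro: order_trans)
  qed
  moreover have "finite (PiE (UNIV::'d set) (\<lambda>_. {..n}))" by (rule finite_PiE) auto
  ultimately show ?thesis by (rule finite_subset)
qed

lemma monomial_rv_eq: "monomial_rv X m = (\<lambda>\<omega>. complex_of_real (mono_r X m \<omega>))"
  by (simp add: monomial_rv_def mono_r_def)

lemma mono_r_RP: "mono_r X m \<in> RP X"
  unfolding mono_r_def by (intro RP_prod RP_power RPX) auto

lemma polyF_eq: "polyF X n = range (PF X n)"
proof
  show "polyF X n \<subseteq> range (PF X n)"
  proof
    fix f assume "f \<in> polyF X n"
    then obtain S c where S: "finite S" "\<forall>m\<in>S. mdeg m \<le> n" and f: "f = (\<lambda>\<omega>. \<Sum>m\<in>S. c m * monomial_rv X m \<omega>)"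
      unfolding polyF_def by blast
    have SK: "S \<subseteq> Kn n" using S by (auto simp: Kn_def)
    have "f = PF X n (\<lambda>m. if m \<in> S then c m else 0)"
      unfolding f PF_def
      by (rule ext, rule sum.mono_neutral_cong_left[OF finite_Kn SK]) auto
    then show "f \<in> range (PF X n)" by blast
  qed
  show "range (PF X n) \<subseteq> polyF X n"
    unfolding polyF_def PF_def using finite_Kn by (auto simp: Kn_def)
qed

lemma polyF_mono: "n \<le> n' \<Longrightarrow> polyF X n \<subseteq> polyF X n'"
  unfolding polyF_def by fastforce

lemma polyAll_iff: "f \<in> polyAll X \<longleftrightarrow> (\<exists>n. f \<in> polyF X n)"
  unfolding polyAll_def by blast

lemma polyF_add: "f \<in> polyF X n \<Longrightarrow> g \<in> polyF X n \<Longrightarrow> (\<lambda>\<omega>. f \<omega> + g \<omega>) \<in> polyF X n"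
proof -
  assume "f \<in> polyF X n" "g \<in> polyF X n"
  then obtain c c' where "f = PF X n c" "g = PF X n c'" unfolding polyF_eq by blast
  hence "(\<lambda>\<omega>. f \<omega> + g \<omega>) = PF X n (\<lambda>m. c m + c' m)"
    by (auto simp: PF_def sum.distrib distrib_right)
  thus ?thesis unfolding polyF_eq by blast
qed

lemma polyF_scale: "f \<in> polyF X n \<Longrightarrow> (\<lambda>\<omega>. a * f \<omega>) \<in> polyF X n"
proof -
  assume "f \<in> polyF X n"
  then obtain c where "f = PF X n c" unfolding polyF_eq by blast
  hence "(\<lambda>\<omega>. a * f \<omega>) = PF X n (\<lambda>m. a * c m)"
    by (auto simp: PF_def sum_distrib_left mult.assoc)
  thus ?thesis unfolding polyF_eq by blast
qed

lemma polyF_zero: "(\<lambda>\<omega>. 0) \<in> polyF X n"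
proof -
  have "(\<lambda>\<omega>. 0) = PF X n (\<lambda>m. 0)" by (simp add: PF_def)
  thus ?thesis unfolding polyF_eq by blast
qed

lemma polyF_diff: "f \<in> polyF X n \<Longrightarrow> g \<in> polyF X n \<Longrightarrow> (\<lambda>\<omega>. f \<omega> - g \<omega>) \<in> polyF X n"
  using polyF_add[of f X n "\<lambda>\<omega>. (-1) * g \<omega>"] polyF_scale[of g X n "-1"] by simp

lemma polyF_sum: "finite K \<Longrightarrow> (\<And>k. k \<in> K \<Longrightarrow> \<phi> k \<in> polyF X n) \<Longrightarrow> (\<lambda>\<omega>. \<Sum>k\<in>K. a k * \<phi> k \<omega>) \<in> polyF X n"
proof (induction K rule: finite_induct)
  case empty thus ?case by (simp add: polyF_zero)
next
  case (insert x F)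
  have "(\<lambda>\<omega>. a x * \<phi> x \<omega>) \<in> polyF X n" by (rule polyF_scale) (use insert in auto)
  from polyF_add[OF this insert.IH] insert show ?case by simp
qed

lemma mdeg_0: "mdeg m = 0 \<longleftrightarrow> m = (\<lambda>_. 0)"
  unfolding mdeg_def by (auto simp: fun_eq_iff)

lemma polyF0: fixes X :: "'d::finite \<Rightarrow> 'a \<Rightarrow> real" shows "f \<in> polyF X 0 \<longleftrightarrow> (\<exists>c. f = (\<lambda>\<omega>. c))"
proof
  assume "f \<in> polyF X 0"
  then obtain S c where S: "finite S" "\<forall>m\<in>S. mdeg m \<le> 0" and f: "f = (\<lambda>\<omega>. \<Sum>m\<in>S. c m * monomial_rv X m \<omega>)"
    unfolding polyF_def by blast
  have "\<forall>m\<in>S. m = (\<lambda>_. 0)" using S by (simp add: mdeg_0)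
  hence "\<And>m \<omega>. m \<in> S \<Longrightarrow> monomial_rv X m \<omega> = 1" by (auto simp: monomial_rv_def)
  hence "f = (\<lambda>\<omega>. \<Sum>m\<in>S. c m)" unfolding f by simp
  thus "\<exists>c. f = (\<lambda>\<omega>. c)" by blast
next
  assume "\<exists>c. f = (\<lambda>\<omega>. c)"
  then obtain a where f: "f = (\<lambda>\<omega>. a)" by blast
  have "f = (\<lambda>\<omega>. \<Sum>m\<in>{\<lambda>_. 0}. (\<lambda>_. a) m * monomial_rv X m \<omega>)"
    unfolding f by (simp add: monomial_rv_def)
  moreover have "\<forall>m\<in>{\<lambda>_::'d. 0::nat}. mdeg m \<le> 0" by (simp add: mdeg_def)
  ultimately show "f \<in> polyF X 0" unfolding polyF_def
    by (intro CollectI exI[of _ "{\<lambda>_. 0}"] exI[of _ "\<lambda>_. a"]) simp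
qed

lemma const_polyAll: "(\<lambda>\<omega>. c) \<in> polyAll X"
  using polyF0 polyAll_iff by blast

lemma X_polyF1: "(\<lambda>\<omega>. complex_of_real (X i \<omega>)) \<in> polyF X 1"
proof -
  define m where "m = (\<lambda>j. if j = i then 1 else (0::nat))"
  have "monomial_rv X m = (\<lambda>\<omega>. complex_of_real (X i \<omega>))"
  proof -
    have "X j \<omega> ^ m j = (if j = i then X j \<omega> else 1)" for j \<omega> by (simp add: m_def)
    thus ?thesis unfolding monomial_rv_def by simp
  qed
  moreover have "mdeg m \<le> 1" unfolding mdeg_def m_def by simp
  ultimately have "(\<lambda>\<omega>. complex_of_real (X i \<omega>)) = (\<lambda>\<omega>. \<Sum>m\<in>{m}. (\<lambda>_. 1) m * monomial_rv X m \<omega>)"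
     by simp
  thus ?thesis unfolding polyF_def using \<open>mdeg m \<le> 1\<close>
    by (intro CollectI exI[of _ "{m}"] exI[of _ "\<lambda>_. 1"]) simp
qed

lemma mulX_polyF: fixes X :: "'d::finite \<Rightarrow> 'a \<Rightarrow> real" shows "f \<in> polyF X n \<Longrightarrow> mulX X j f \<in> polyF X (Suc n)"
proof -
  assume "f \<in> polyF X n"
  then obtain S c where S: "finite S" "\<forall>m\<in>S. mdeg m \<le> n" and f: "f = (\<lambda>\<omega>. \<Sum>m\<in>S. c m * monomial_rv X m \<omega>)"
    unfolding polyF_def by blast
  define b where "b = (\<lambda>m::'d\<Rightarrow>nat. m(j := Suc (m j)))"
  define ub where "ub = (\<lambda>m::'d\<Rightarrow>nat. m(j := m j - 1))"
  have ub: "ub (b m) = m" for m unfolding b_def ub_def by auto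
  hence inj: "inj_on b S" by (metis inj_on_inverseI)
  have mb: "monomial_rv X (b m) \<omega> = complex_of_real (X j \<omega>) * monomial_rv X m \<omega>" for m \<omega>
  proof -
    have "(\<Prod>i\<in>UNIV. X i \<omega> ^ b m i) = X i \<omega> ^ b m i * (\<Prod>i\<in>UNIV - {i}. X i \<omega> ^ b m i)" for i
      by (rule prod.remove) auto
    have "(\<Prod>i\<in>UNIV. X i \<omega> ^ b m i) = X j \<omega> ^ b m j * (\<Prod>i\<in>UNIV - {j}. X i \<omega> ^ b m i)"
      by (rule prod.remove) auto
    also have "(\<Prod>i\<in>UNIV - {j}. X i \<omega> ^ b m i) = (\<Prod>i\<in>UNIV - {j}. X i \<omega> ^ m i)"
      by (rule prod.cong) (auto simp: b_def)
    also have "X j \<omega> ^ b m j = X j \<omega> * X j \<omega> ^ m j" by (simp add: b_def)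
    also have "X j \<omega> * X j \<omega> ^ m j * (\<Prod>i\<in>UNIV - {j}. X i \<omega> ^ m i) = X j \<omega> * (\<Prod>i\<in>UNIV. X i \<omega> ^ m i)"
      by (subst prod.remove[of UNIV j]) auto
    finally show ?thesis unfolding monomial_rv_def by simp
  qed
  have md: "mdeg (b m) = Suc (mdeg m)" for m
  proof -
    have "mdeg (b m) = b m j + (\<Sum>i\<in>UNIV - {j}. b m i)" unfolding mdeg_def by (rule sum.remove) auto
    also have "(\<Sum>i\<in>UNIV - {j}. b m i) = (\<Sum>i\<in>UNIV - {j}. m i)" by (rule sum.cong) (auto simp: b_def)
    also have "b m j + \<dots> = Suc (m j + (\<Sum>i\<in>UNIV - {j}. m i))" by (simp add: b_def)
    also have "m j + (\<Sum>i\<in>UNIV - {j}. m i) = mdeg m" unfolding mdeg_def by (rule sum.remove[symmetric]) auto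
    finally show ?thesis .
  qed
  have "mulX X j f = (\<lambda>\<omega>. \<Sum>m\<in>S. c m * monomial_rv X (b m) \<omega>)"
    unfolding f mulX_def by (simp add: mb sum_distrib_left mult.left_commute)
  also have "\<dots> = (\<lambda>\<omega>. \<Sum>m\<in>b ` S. c (ub m) * monomial_rv X m \<omega>)"
    by (subst sum.reindex[OF inj]) (auto simp: ub)
  finally have "mulX X j f = (\<lambda>\<omega>. \<Sum>m\<in>b ` S. c (ub m) * monomial_rv X m \<omega>)" .
  moreover have "\<forall>m\<in>b ` S. mdeg m \<le> Suc n" using S md by auto
  ultimately show ?thesis unfolding polyF_def using S
    by (intro CollectI exI[of _ "b ` S"] exI[of _ "\<lambda>m. c (ub m)"]) simp
qed

lemma mulX_polyAll: "f \<in> polyAll X \<Longrightarrow> mulX X j f \<in> polyAll X"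
  using mulX_polyF polyAll_iff by blast

lemma polyAll_add: "f \<in> polyAll X \<Longrightarrow> g \<in> polyAll X \<Longrightarrow> (\<lambda>\<omega>. f \<omega> + g \<omega>) \<in> polyAll X"
proof -
  assume "f \<in> polyAll X" "g \<in> polyAll X"
  then obtain n n' where "f \<in> polyF X n" "g \<in> polyF X n'" unfolding polyAll_iff by blast
  hence "f \<in> polyF X (max n n')" "g \<in> polyF X (max n n')" using polyF_mono[of n "max n n'" X] polyF_mono[of n' "max n n'" X] by auto
  thus ?thesis using polyF_add polyAll_iff by blast
qed

lemma polyAll_scale: "f \<in> polyAll X \<Longrightarrow> (\<lambda>\<omega>. a * f \<omega>) \<in> polyAll X"
  using polyF_scale polyAll_iff by blast

lemma polyAll_diff: "f \<in> polyAll X \<Longrightarrow> g \<in> polyAll X \<Longrightarrow> (\<lambda>\<omega>. f \<omega> - g \<omega>) \<in> polyAll X"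
  using polyAll_add[of f X "\<lambda>\<omega>. (-1) * g \<omega>"] polyAll_scale[of g X "-1"] by simp

lemma polyAll_sum: "finite K \<Longrightarrow> (\<And>k. k \<in> K \<Longrightarrow> \<phi> k \<in> polyAll X) \<Longrightarrow> (\<lambda>\<omega>. \<Sum>k\<in>K. a k * \<phi> k \<omega>) \<in> polyAll X"
proof (induction K rule: finite_induct)
  case empty thus ?case using const_polyAll[of 0] by simp
next
  case (insert x F)
  have "(\<lambda>\<omega>. a x * \<phi> x \<omega>) \<in> polyAll X" by (rule polyAll_scale) (use insert in auto)
  from polyAll_add[OF this insert.IH] insert show ?case by simp
qed

context mx begin

lemma poly_int2:
  assumes "f \<in> polyAll X" "g \<in> polyAll X"
  shows "integrable M (\<lambda>\<omega>. f \<omega> * cnj (g \<omega>))"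
proof -
  obtain n n' where "f \<in> polyF X n" "g \<in> polyF X n'" using assms unfolding polyAll_iff by blast
  then obtain c c' where f: "f = PF X n c" and g: "g = PF X n' c'" unfolding polyF_eq by blast
  have "(\<lambda>\<omega>. f \<omega> * cnj (g \<omega>)) = (\<lambda>\<omega>. \<Sum>m\<in>Kn n. \<Sum>m'\<in>Kn n'. (c m * cnj (c' m')) * complex_of_real (mono_r X m \<omega> * mono_r X m' \<omega>))"
    unfolding f g PF_def monomial_rv_eq
  proof (rule ext)
    fix \<omega>
    have "(\<Sum>m\<in>Kn n. c m * complex_of_real (mono_r X m \<omega>)) * cnj (\<Sum>m\<in>Kn n'. c' m * complex_of_real (mono_r X m \<omega>))
      = (\<Sum>m\<in>Kn n. c m * complex_of_real (mono_r X m \<omega>)) * (\<Sum>m\<in>Kn n'. cnj (c' m) * complex_of_real (mono_r X m \<omega>))"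
      by simp
    also have "\<dots> = (\<Sum>m\<in>Kn n. \<Sum>m'\<in>Kn n'. (c m * complex_of_real (mono_r X m \<omega>)) * (cnj (c' m') * complex_of_real (mono_r X m' \<omega>)))"
      by (rule sum_product)
    also have "\<dots> = (\<Sum>m\<in>Kn n. \<Sum>m'\<in>Kn n'. (c m * cnj (c' m')) * complex_of_real (mono_r X m \<omega> * mono_r X m' \<omega>))"
      by (simp add: mult_ac)
    finally show "(\<Sum>m\<in>Kn n. c m * complex_of_real (mono_r X m \<omega>)) * cnj (\<Sum>m\<in>Kn n'. c' m * complex_of_real (mono_r X m \<omega>))
      = (\<Sum>m\<in>Kn n. \<Sum>m'\<in>Kn n'. (c m * cnj (c' m')) * complex_of_real (mono_r X m \<omega> * mono_r X m' \<omega>))" .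
  qed
  moreover have "integrable M (\<lambda>\<omega>. \<Sum>m\<in>Kn n. \<Sum>m'\<in>Kn n'. (c m * cnj (c' m')) * complex_of_real (mono_r X m \<omega> * mono_r X m' \<omega>))"
  proof -
    have ii: "integrable M (\<lambda>\<omega>. complex_of_real (mono_r X m \<omega> * mono_r X m' \<omega>))" for m m'
      by (intro integrable_of_real RP_int RPmul mono_r_RP)
    show ?thesis by (rule Bochner_Integration.integrable_sum, rule Bochner_Integration.integrable_sum, rule Bochner_Integration.integrable_mult_right, rule ii)
  qed
  ultimately show ?thesis by simp
qed

lemma poly_int: "f \<in> polyAll X \<Longrightarrow> integrable M f"
  using poly_int2[OF _ const_polyAll[of 1]] by simp

lemma poly_meas: "f \<in> polyAll X \<Longrightarrow> f \<in> borel_measurable M"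
  using poly_int by auto

lemma cinner_add_left: "f \<in> polyAll X \<Longrightarrow> g \<in> polyAll X \<Longrightarrow> h \<in> polyAll X \<Longrightarrow>
  cinner M (\<lambda>\<omega>. f \<omega> + g \<omega>) h = cinner M f h + cinner M g h"
  unfolding cinner_def by (simp add: distrib_right poly_int2)

lemma cinner_diff_left: "f \<in> polyAll X \<Longrightarrow> g \<in> polyAll X \<Longrightarrow> h \<in> polyAll X \<Longrightarrow>
  cinner M (\<lambda>\<omega>. f \<omega> - g \<omega>) h = cinner M f h - cinner M g h"
  unfolding cinner_def by (simp add: left_diff_distrib poly_int2)

lemma cinner_scale_left: "cinner M (\<lambda>\<omega>. a * f \<omega>) h = a * cinner M f h"
  unfolding cinner_def by (simp add: mult.assoc)

lemma cinner_sym: "cinner M g f = cnj (cinner M f g)"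
proof -
  have "cnj (cinner M f g) = integral\<^sup>L M (\<lambda>\<omega>. cnj (f \<omega> * cnj (g \<omega>)))"
    unfolding cinner_def by (rule Bochner_Integration.integral_cnj[symmetric])
  thus ?thesis unfolding cinner_def by (simp add: mult.commute)
qed

lemma cinner_sum_right: "finite K \<Longrightarrow> f \<in> polyAll X \<Longrightarrow> (\<And>k. k \<in> K \<Longrightarrow> \<phi> k \<in> polyAll X) \<Longrightarrow>
  cinner M f (\<lambda>\<omega>. \<Sum>k\<in>K. a k * \<phi> k \<omega>) = (\<Sum>k\<in>K. cnj (a k) * cinner M f (\<phi> k))"
proof -
  assume a: "finite K" "f \<in> polyAll X" "\<And>k. k \<in> K \<Longrightarrow> \<phi> k \<in> polyAll X"
  have "(\<lambda>\<omega>. f \<omega> * cnj (\<Sum>k\<in>K. a k * \<phi> k \<omega>)) = (\<lambda>\<omega>. \<Sum>k\<in>K. cnj (a k) * (f \<omega> * cnj (\<phi> k \<omega>)))"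
    by (simp add: sum_distrib_left algebra_simps)
  hence "cinner M f (\<lambda>\<omega>. \<Sum>k\<in>K. a k * \<phi> k \<omega>) = (\<Sum>k\<in>K. integral\<^sup>L M (\<lambda>\<omega>. cnj (a k) * (f \<omega> * cnj (\<phi> k \<omega>))))"
    unfolding cinner_def using a by (simp add: integral_sum poly_int2)
  thus ?thesis unfolding cinner_def by simp
qed

lemma cinner_one: "cinner M f (\<lambda>\<omega>. 1) = integral\<^sup>L M f"
  unfolding cinner_def by simp

lemma cinner_null:
  assumes u: "u \<in> polyAll X" and x: "x \<in> polyAll X" and 0: "cinner M u u = 0"
  shows "cinner M x u = 0"
proof -
  have "cinner M u u = complex_of_real (integral\<^sup>L M (\<lambda>\<omega>. (cmod (u \<omega>))\<^sup>2))"
  proof -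
    have e: "(complex_of_real (cmod z))^2 = z * cnj z" for z
      by (simp add: complex_norm_square[symmetric])
    show ?thesis unfolding cinner_def by (simp add: e flip: integral_complex_of_real)
  qed
  with 0 have i0: "integral\<^sup>L M (\<lambda>\<omega>. (cmod (u \<omega>))\<^sup>2) = 0" by simp
  have ii: "integrable M (\<lambda>\<omega>. (cmod (u \<omega>))\<^sup>2)"
  proof -
    have "integrable M (\<lambda>\<omega>. Re (u \<omega> * cnj (u \<omega>)))" using poly_int2[OF u u] by (rule integrable_Re)
    thus ?thesis by (simp add: complex_mult_cnj cmod_power2)
  qed
  have "AE \<omega> in M. (cmod (u \<omega>))\<^sup>2 = 0"
    using integral_nonneg_eq_0_iff_AE[OF ii] i0 by simp
  hence "AE \<omega> in M. x \<omega> * cnj (u \<omega>) = 0" by eventually_elim simp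
  hence "integral\<^sup>L M (\<lambda>\<omega>. x \<omega> * cnj (u \<omega>)) = integral\<^sup>L M (\<lambda>\<omega>. 0)"
    by (intro integral_cong_AE) (auto intro!: borel_measurable_integrable poly_int2 x u)
  thus ?thesis unfolding cinner_def by simp
qed

end


context mx begin

lemma cinner_add_right: "f \<in> polyAll X \<Longrightarrow> g \<in> polyAll X \<Longrightarrow> h \<in> polyAll X \<Longrightarrow>
  cinner M f (\<lambda>\<omega>. g \<omega> + h \<omega>) = cinner M f g + cinner M f h"
  using cinner_add_left[of g h f] cinner_sym[of f] cinner_sym[of f g] cinner_sym[of f h] by simp

lemma polyAll_sum': "finite K \<Longrightarrow> (\<And>k. k \<in> K \<Longrightarrow> F k \<in> polyAll X) \<Longrightarrow> (\<lambda>\<omega>. \<Sum>k\<in>K. F k \<omega>) \<in> polyAll X"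
  using polyAll_sum[of K F X "\<lambda>_. 1"] by simp

lemma GS:
  assumes "finite K"
  shows "(\<And>k. k \<in> K \<Longrightarrow> \<phi> k \<in> polyAll X) \<Longrightarrow> f \<in> polyAll X \<Longrightarrow>
    \<exists>c. \<forall>k\<in>K. cinner M (\<lambda>\<omega>. f \<omega> - (\<Sum>k'\<in>K. c k' * \<phi> k' \<omega>)) (\<phi> k) = 0"
  using assms
proof (induction K arbitrary: f rule: finite_induct)
  case empty
  then show ?case by simp
next
  case (insert k0 K)
  have phK: "\<And>k. k \<in> K \<Longrightarrow> \<phi> k \<in> polyAll X" using insert by auto
  have ph0: "\<phi> k0 \<in> polyAll X" using insert by auto
  obtain c1 where c1: "\<forall>k\<in>K. cinner M (\<lambda>\<omega>. f \<omega> - (\<Sum>k'\<in>K. c1 k' * \<phi> k' \<omega>)) (\<phi> k) = 0"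
    using insert.IH[OF phK insert.prems(2)] by blast
  obtain c2 where c2: "\<forall>k\<in>K. cinner M (\<lambda>\<omega>. \<phi> k0 \<omega> - (\<Sum>k'\<in>K. c2 k' * \<phi> k' \<omega>)) (\<phi> k) = 0"
    using insert.IH[OF phK ph0] by blast
  define g1 where "g1 = (\<lambda>\<omega>. \<Sum>k'\<in>K. c1 k' * \<phi> k' \<omega>)"
  define p where "p = (\<lambda>\<omega>. \<Sum>k'\<in>K. c2 k' * \<phi> k' \<omega>)"
  define u where "u = (\<lambda>\<omega>. \<phi> k0 \<omega> - p \<omega>)"
  define h1 where "h1 = (\<lambda>\<omega>. f \<omega> - g1 \<omega>)"
  have g1P: "g1 \<in> polyAll X" unfolding g1_def by (rule polyAll_sum) (use insert phK in auto)
  have pP: "p \<in> polyAll X" unfolding p_def by (rule polyAll_sum) (use insert phK in auto)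
  have uP: "u \<in> polyAll X" unfolding u_def by (rule polyAll_diff[OF ph0 pP])
  have h1P: "h1 \<in> polyAll X" unfolding h1_def by (rule polyAll_diff[OF insert.prems(2) g1P])
  define a where "a = (if cinner M u u = 0 then 0 else cinner M h1 u / cinner M u u)"
  define c where "c = (\<lambda>k. if k = k0 then a else c1 k - a * c2 k)"
  have "(\<lambda>\<omega>. \<Sum>k\<in>insert k0 K. c k * \<phi> k \<omega>) = (\<lambda>\<omega>. g1 \<omega> + a * u \<omega>)"
  proof
    fix \<omega>
    have "(\<Sum>k\<in>insert k0 K. c k * \<phi> k \<omega>) = a * \<phi> k0 \<omega> + (\<Sum>k\<in>K. c k * \<phi> k \<omega>)"
      using insert by (simp add: c_def)
    also have "(\<Sum>k\<in>K. c k * \<phi> k \<omega>) = (\<Sum>k\<in>K. c1 k * \<phi> k \<omega> - a * (c2 k * \<phi> k \<omega>))"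
      by (rule sum.cong) (use insert in \<open>auto simp: c_def algebra_simps\<close>)
    also have "\<dots> = g1 \<omega> - a * p \<omega>"
      unfolding g1_def p_def by (simp add: sum_subtractf sum_distrib_left)
    finally show "(\<Sum>k\<in>insert k0 K. c k * \<phi> k \<omega>) = g1 \<omega> + a * u \<omega>"
      by (simp add: u_def algebra_simps)
  qed
  hence fg: "(\<lambda>\<omega>. f \<omega> - (\<Sum>k\<in>insert k0 K. c k * \<phi> k \<omega>)) = (\<lambda>\<omega>. h1 \<omega> - a * u \<omega>)"
    by (simp add: h1_def fun_eq_iff algebra_simps)
  have auP: "(\<lambda>\<omega>. a * u \<omega>) \<in> polyAll X" by (rule polyAll_scale[OF uP])
  have hP: "(\<lambda>\<omega>. h1 \<omega> - a * u \<omega>) \<in> polyAll X" by (rule polyAll_diff[OF h1P auP])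
  have orthK: "cinner M (\<lambda>\<omega>. h1 \<omega> - a * u \<omega>) (\<phi> k) = 0" if k: "k \<in> K" for k
  proof -
    have "cinner M (\<lambda>\<omega>. h1 \<omega> - a * u \<omega>) (\<phi> k) = cinner M h1 (\<phi> k) - a * cinner M u (\<phi> k)"
      by (simp add: cinner_diff_left[OF h1P auP phK[OF k]] cinner_scale_left)
    also have "cinner M h1 (\<phi> k) = 0" using c1 k unfolding h1_def g1_def by blast
    also have "cinner M u (\<phi> k) = 0" using c2 k unfolding u_def p_def by blast
    finally show ?thesis by simp
  qed
  have orth0: "cinner M (\<lambda>\<omega>. h1 \<omega> - a * u \<omega>) (\<phi> k0) = 0"
  proof -
    let ?h = "\<lambda>\<omega>. h1 \<omega> - a * u \<omega>"
    have e: "\<phi> k0 = (\<lambda>\<omega>. u \<omega> + p \<omega>)" by (simp add: u_def)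
    have "cinner M ?h (\<phi> k0) = cinner M ?h u + cinner M ?h p"
      unfolding e by (rule cinner_add_right[OF hP uP pP])
    also have "cinner M ?h p = (\<Sum>k\<in>K. cnj (c2 k) * cinner M ?h (\<phi> k))"
      unfolding p_def by (rule cinner_sum_right) (use insert hP phK in auto)
    also have "\<dots> = 0" using orthK by simp
    also have "cinner M ?h u = cinner M h1 u - a * cinner M u u"
      by (simp add: cinner_diff_left[OF h1P auP uP] cinner_scale_left)
    also have "\<dots> = 0"
    proof (cases "cinner M u u = 0")
      case True
      then show ?thesis using cinner_null[OF uP h1P] by (simp add: a_def)
    next
      case False
      then show ?thesis by (simp add: a_def)
    qed
    finally show ?thesis by simp
  qed
  show ?case
    by (rule exI[of _ c]) (use orthK orth0 fg in auto)
qed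

lemma monomial_polyF: "m \<in> Kn n \<Longrightarrow> monomial_rv X m \<in> polyF X n"
  unfolding polyF_def Kn_def
  by (intro CollectI exI[of _ "{m}"] exI[of _ "\<lambda>_. 1"]) auto

lemma polyF_polyAll: "f \<in> polyF X n \<Longrightarrow> f \<in> polyAll X"
  using polyAll_iff by blast

lemma proj_polyF:
  assumes f: "f \<in> polyAll X"
  shows "\<exists>g\<in>polyF X n. \<forall>h\<in>polyF X n. cinner M (\<lambda>\<omega>. f \<omega> - g \<omega>) h = 0"
proof -
  have mP: "\<And>m. m \<in> Kn n \<Longrightarrow> monomial_rv X m \<in> polyAll X"
    using monomial_polyF polyF_polyAll by blast
  obtain c where c: "\<forall>m\<in>Kn n. cinner M (\<lambda>\<omega>. f \<omega> - (\<Sum>m'\<in>Kn n. c m' * monomial_rv X m' \<omega>)) (monomial_rv X m) = 0"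
    using GS[where K="Kn n" and \<phi>="monomial_rv X" and f=f, OF finite_Kn mP f] by blast
  have gP: "PF X n c \<in> polyF X n" unfolding polyF_eq by blast
  have dP: "(\<lambda>\<omega>. f \<omega> - PF X n c \<omega>) \<in> polyAll X"
    by (rule polyAll_diff[OF f polyF_polyAll[OF gP]])
  have "cinner M (\<lambda>\<omega>. f \<omega> - PF X n c \<omega>) h = 0" if h: "h \<in> polyF X n" for h
  proof -
    obtain c' where h': "h = PF X n c'" using h unfolding polyF_eq by blast
    have "cinner M (\<lambda>\<omega>. f \<omega> - PF X n c \<omega>) h = (\<Sum>m\<in>Kn n. cnj (c' m) * cinner M (\<lambda>\<omega>. f \<omega> - PF X n c \<omega>) (monomial_rv X m))"
      unfolding h' PF_def[of X n c'] by (rule cinner_sum_right[OF finite_Kn dP mP])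
    also have "\<dots> = 0" using c by (simp add: PF_def)
    finally show ?thesis .
  qed
  thus ?thesis using gP by blast
qed

lemma Gsp_polyF: "Gsp M X n \<subseteq> polyF X n"
  unfolding Gsp_def by auto

lemma proj_Gsp:
  assumes f: "f \<in> polyAll X"
  shows "\<exists>g. g \<in> Gsp M X n \<and> (\<forall>h\<in>Gsp M X n. cinner M (\<lambda>\<omega>. f \<omega> - g \<omega>) h = 0)"
proof (cases "n = 0")
  case True
  then show ?thesis using proj_polyF[OF f, of 0] by (auto simp: Gsp_def)
next
  case False
  obtain pf where pf: "pf \<in> polyF X n" "\<forall>h\<in>polyF X n. cinner M (\<lambda>\<omega>. f \<omega> - pf \<omega>) h = 0"
    using proj_polyF[OF f, of n] by blast
  have pfP: "pf \<in> polyAll X" using pf polyF_polyAll by blast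
  obtain q where q: "q \<in> polyF X (n - 1)" "\<forall>h\<in>polyF X (n - 1). cinner M (\<lambda>\<omega>. pf \<omega> - q \<omega>) h = 0"
    using proj_polyF[OF pfP, of "n - 1"] by blast
  have qn: "q \<in> polyF X n" using q(1) polyF_mono[of "n - 1" n X] by auto
  have qP: "q \<in> polyAll X" using q polyF_polyAll by blast
  define g where "g = (\<lambda>\<omega>. pf \<omega> - q \<omega>)"
  have gG: "g \<in> Gsp M X n"
    using False q(2) polyF_diff[OF pf(1) qn] unfolding Gsp_def g_def by auto
  have "cinner M (\<lambda>\<omega>. f \<omega> - g \<omega>) h = 0" if h: "h \<in> Gsp M X n" for h
  proof -
    have hn: "h \<in> polyF X n" and ho: "\<forall>k\<in>polyF X (n - 1). cinner M h k = 0"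
      using h False unfolding Gsp_def by auto
    have hP: "h \<in> polyAll X" using hn polyF_polyAll by blast
    have e: "(\<lambda>\<omega>. f \<omega> - g \<omega>) = (\<lambda>\<omega>. (f \<omega> - pf \<omega>) + q \<omega>)" by (simp add: g_def fun_eq_iff)
    have "cinner M (\<lambda>\<omega>. f \<omega> - g \<omega>) h = cinner M (\<lambda>\<omega>. f \<omega> - pf \<omega>) h + cinner M q h"
      unfolding e by (rule cinner_add_left[OF polyAll_diff[OF f pfP] qP hP])
    also have "cinner M (\<lambda>\<omega>. f \<omega> - pf \<omega>) h = 0" using pf(2) hn by blast
    also have "cinner M q h = cnj (cinner M h q)" by (rule cinner_sym)
    also have "cinner M h q = 0" using ho q(1) by blast
    finally show ?thesis by simp
  qed
  thus ?thesis using gG by blast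
qed

lemma projG_spec:
  assumes "f \<in> polyAll X"
  shows "projG M X n f \<in> Gsp M X n" "\<forall>h\<in>Gsp M X n. cinner M (\<lambda>\<omega>. f \<omega> - projG M X n f \<omega>) h = 0"
  using someI_ex[OF proj_Gsp[OF assms, of n]] unfolding projG_def by auto

lemma projG_polyAll: "f \<in> polyAll X \<Longrightarrow> projG M X n f \<in> polyAll X"
  using projG_spec(1) Gsp_polyF polyF_polyAll by blast

lemma one_polyF: "(\<lambda>\<omega>. c) \<in> polyF X n"
  using polyF0[of "\<lambda>\<omega>. c" X] polyF_mono[of 0 n X] by auto

lemma E_projG_pos:
  assumes "h \<in> polyAll X" "k \<ge> 1"
  shows "integral\<^sup>L M (projG M X k h) = 0"
proof -
  have "cinner M (projG M X k h) (\<lambda>\<omega>. 1) = 0"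
    using projG_spec(1)[OF assms(1), of k] assms(2) one_polyF[of 1 "k - 1"] unfolding Gsp_def by auto
  thus ?thesis by (simp add: cinner_one)
qed

lemma E_projG_0:
  assumes h: "h \<in> polyAll X"
  shows "integral\<^sup>L M (projG M X 0 h) = integral\<^sup>L M h"
proof -
  have "cinner M (\<lambda>\<omega>. h \<omega> - projG M X 0 h \<omega>) (\<lambda>\<omega>. 1) = 0"
    using projG_spec(2)[OF h, of 0] one_polyF[of 1 0] unfolding Gsp_def by auto
  hence "integral\<^sup>L M (\<lambda>\<omega>. h \<omega> - projG M X 0 h \<omega>) = 0" by (simp add: cinner_one)
  thus ?thesis using poly_int[OF h] poly_int[OF projG_polyAll[OF h]] by simp
qed

end

locale mx0 = mx +
  assumes mean0: "\<And>k. integral\<^sup>L M (X k) = 0"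
begin

lemma Xc_polyAll: "(\<lambda>\<omega>. complex_of_real (X i \<omega>)) \<in> polyAll X"
  using X_polyF1 polyF_polyAll by blast

lemma E_Xc: "integral\<^sup>L M (\<lambda>\<omega>. complex_of_real (X i \<omega>)) = 0"
  using mean0 by simp

lemma E_Xc_const: "integral\<^sup>L M (\<lambda>\<omega>. complex_of_real (X i \<omega>) * c) = 0"
  using E_Xc by simp

lemma U_one: "Uop M X i (\<lambda>\<omega>. 1) = (\<lambda>\<omega>. 0)"
proof -
  have one0: "(\<lambda>\<omega>. 1::complex) \<in> polyF X 0" by (rule one_polyF)
  have pd: "pdeg X (\<lambda>\<omega>. 1) = 0" unfolding pdeg_def by (rule Least_eq_0) (rule one0)
  have oneP: "(\<lambda>\<omega>. 1::complex) \<in> polyAll X" by (rule polyF_polyAll[OF one0])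
  obtain c where c: "projG M X 0 (\<lambda>\<omega>. 1) = (\<lambda>\<omega>. c)"
    using projG_spec(1)[OF oneP, of 0] polyF0 unfolding Gsp_def by auto
  have "cinner M (\<lambda>\<omega>. 1 - projG M X 0 (\<lambda>\<omega>. 1) \<omega>) (\<lambda>\<omega>. 1) = 0"
    using projG_spec(2)[OF oneP, of 0] one0 unfolding Gsp_def by auto
  hence "c = 1" unfolding c cinner_one by (simp add: prob_space)
  hence mx1: "mulX X i (projG M X 0 (\<lambda>\<omega>. 1)) = (\<lambda>\<omega>. complex_of_real (X i \<omega>))"
    unfolding c mulX_def by simp
  obtain c' where c': "projG M X 0 (\<lambda>\<omega>. complex_of_real (X i \<omega>)) = (\<lambda>\<omega>. c')"
    using projG_spec(1)[OF Xc_polyAll, of 0 i] polyF0 unfolding Gsp_def by auto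
  have "c' = 0"
    using E_projG_0[OF Xc_polyAll, of i] E_Xc[of i] unfolding c' by (simp add: prob_space)
  show ?thesis
    unfolding Uop_def a_minus_def a_zero_def pd by (simp add: mx1 c' \<open>c' = 0\<close>)
qed

lemma Uop_polyAll:
  assumes g: "g \<in> polyAll X"
  shows "Uop M X i g \<in> polyAll X"
proof -
  have hP: "mulX X i (projG M X n g) \<in> polyAll X" for n by (rule mulX_polyAll[OF projG_polyAll[OF g]])
  have F1: "(if n = 0 then (\<lambda>\<omega>. 0) else projG M X (n - 1) (mulX X i (projG M X n g))) \<in> polyAll X" for n
    using const_polyAll[of 0 X] projG_polyAll[OF hP] by auto
  have am: "a_minus M X i g = (\<lambda>\<omega>. \<Sum>n\<le>pdeg X g. (if n = 0 then (\<lambda>\<omega>. 0) else projG M X (n - 1) (mulX X i (projG M X n g))) \<omega>)"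
    unfolding a_minus_def by (intro ext sum.cong) auto
  have amP: "a_minus M X i g \<in> polyAll X" unfolding am by (rule polyAll_sum') (use F1 in auto)
  have azP: "a_zero M X i g \<in> polyAll X" unfolding a_zero_def by (rule polyAll_sum') (use projG_polyAll[OF hP] in auto)
  have "(\<lambda>\<omega>. a_minus M X i g \<omega> + (1/2) * a_zero M X i g \<omega>) \<in> polyAll X"
    by (rule polyAll_add[OF amP polyAll_scale[OF azP]])
  thus ?thesis unfolding Uop_def by simp
qed

lemma U_mean:
  assumes g: "g \<in> polyAll X"
  shows "integral\<^sup>L M (Uop M X i g) = integral\<^sup>L M (mulX X i g)"
proof -
  define N where "N = pdeg X g"
  have gN: "g \<in> polyF X N"
    unfolding N_def pdeg_def using g polyAll_iff by (metis LeastI_ex)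
  define P where "P = (\<lambda>n. projG M X n g)"
  define h where "h = (\<lambda>n. mulX X i (P n))"
  have PP: "P n \<in> polyAll X" for n unfolding P_def by (rule projG_polyAll[OF g])
  have hP: "h n \<in> polyAll X" for n unfolding h_def by (rule mulX_polyAll[OF PP])
  have am: "a_minus M X i g = (\<lambda>\<omega>. \<Sum>n\<le>N. (if n = 0 then (\<lambda>\<omega>. 0) else projG M X (n - 1) (h n)) \<omega>)"
    unfolding a_minus_def N_def h_def P_def by (intro ext sum.cong) auto
  have az: "a_zero M X i g = (\<lambda>\<omega>. \<Sum>n\<le>N. projG M X n (h n) \<omega>)"
    unfolding a_zero_def N_def h_def P_def by simp
  have F1: "(if n = 0 then (\<lambda>\<omega>. 0) else projG M X (n - 1) (h n)) \<in> polyAll X" for n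
    using const_polyAll[of 0 X] projG_polyAll[OF hP] by auto
  have amP: "a_minus M X i g \<in> polyAll X" unfolding am by (rule polyAll_sum') (use F1 in auto)
  have azP: "a_zero M X i g \<in> polyAll X" unfolding az by (rule polyAll_sum') (use projG_polyAll[OF hP] in auto)
  have Eam: "integral\<^sup>L M (a_minus M X i g) = (\<Sum>n\<le>N. if n = 1 then integral\<^sup>L M (h 1) else 0)"
  proof -
    have "integral\<^sup>L M (a_minus M X i g) = (\<Sum>n\<le>N. integral\<^sup>L M (if n = 0 then (\<lambda>\<omega>. 0) else projG M X (n - 1) (h n)))"
      unfolding am by (rule Bochner_Integration.integral_sum) (use F1 poly_int in auto)
    also have "\<dots> = (\<Sum>n\<le>N. if n = 1 then integral\<^sup>L M (h 1) else 0)"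
    proof (rule sum.cong)
      fix n assume "n \<in> {..N}"
      show "integral\<^sup>L M (if n = 0 then (\<lambda>\<omega>. 0) else projG M X (n - 1) (h n)) = (if n = 1 then integral\<^sup>L M (h 1) else 0)"
        using E_projG_0[OF hP, of 1] E_projG_pos[OF hP, of "n - 1" n] by auto
    qed simp
    finally show ?thesis .
  qed
  have Eaz: "integral\<^sup>L M (a_zero M X i g) = integral\<^sup>L M (h 0)"
  proof -
    have "integral\<^sup>L M (a_zero M X i g) = (\<Sum>n\<le>N. integral\<^sup>L M (projG M X n (h n)))"
      unfolding az by (rule Bochner_Integration.integral_sum) (use projG_polyAll[OF hP] poly_int in auto)
    also have "\<dots> = (\<Sum>n\<le>N. if n = 0 then integral\<^sup>L M (h 0) else 0)"
    proof (rule sum.cong)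
      fix n assume "n \<in> {..N}"
      show "integral\<^sup>L M (projG M X n (h n)) = (if n = 0 then integral\<^sup>L M (h 0) else 0)"
        using E_projG_0[OF hP, of 0] E_projG_pos[OF hP, of n n] by auto
    qed simp
    finally show ?thesis by simp
  qed
  have h0: "integral\<^sup>L M (h 0) = 0"
  proof -
    obtain c where "P 0 = (\<lambda>\<omega>. c)"
      using projG_spec(1)[OF g, of 0] polyF0 unfolding Gsp_def P_def by auto
    thus ?thesis unfolding h_def mulX_def using E_Xc_const by simp
  qed
  have EU: "integral\<^sup>L M (Uop M X i g) = integral\<^sup>L M (a_minus M X i g) + integral\<^sup>L M (a_zero M X i g) / 2"
    unfolding Uop_def using poly_int[OF amP] poly_int[OF azP] by simp
  show ?thesis
  proof (cases "N = 0")
    case True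
    obtain c where "g = (\<lambda>\<omega>. c)" using gN True polyF0 by auto
    hence "integral\<^sup>L M (mulX X i g) = 0" unfolding mulX_def using E_Xc_const by simp
    then show ?thesis using EU Eam Eaz h0 True by simp
  next
    case False
    have s: "(\<Sum>n\<le>N. if n = 1 then integral\<^sup>L M (h 1) else 0) = integral\<^sup>L M (h 1)"
      using False by (subst sum.delta) auto
    have XG: "(\<lambda>\<omega>. complex_of_real (X i \<omega>)) \<in> Gsp M X 1"
    proof -
      have "cinner M (\<lambda>\<omega>. complex_of_real (X i \<omega>)) k = 0" if k0: "k \<in> polyF X 0" for k
      proof -
        obtain c where "k = (\<lambda>\<omega>. c)" using k0 polyF0[of k X] by auto
        thus ?thesis unfolding cinner_def using E_Xc_const[of i "cnj c"] by simp
      qed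
      thus ?thesis unfolding Gsp_def using X_polyF1 by auto
    qed
    have "cinner M (\<lambda>\<omega>. g \<omega> - P 1 \<omega>) (\<lambda>\<omega>. complex_of_real (X i \<omega>)) = 0"
      using projG_spec(2)[OF g, of 1] XG unfolding P_def by blast
    hence "cinner M g (\<lambda>\<omega>. complex_of_real (X i \<omega>)) = cinner M (P 1) (\<lambda>\<omega>. complex_of_real (X i \<omega>))"
      using cinner_diff_left[OF g PP Xc_polyAll] by simp
    moreover have "cinner M g (\<lambda>\<omega>. complex_of_real (X i \<omega>)) = integral\<^sup>L M (mulX X i g)"
      unfolding cinner_def mulX_def by (simp add: mult.commute)
    moreover have "cinner M (P 1) (\<lambda>\<omega>. complex_of_real (X i \<omega>)) = integral\<^sup>L M (h 1)"
      unfolding cinner_def h_def mulX_def by (simp add: mult.commute)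
    ultimately show ?thesis using EU Eam Eaz h0 s by simp
  qed
qed

end


definition pX :: "('d \<Rightarrow> 'a \<Rightarrow> real) \<Rightarrow> 'd list \<Rightarrow> 'a \<Rightarrow> real" where
  "pX X js = (\<lambda>\<omega>. prod_list (map (\<lambda>j. X j \<omega>) js))"

definition Lf :: "('d::finite \<Rightarrow> 'a \<Rightarrow> real) \<Rightarrow> ('d \<Rightarrow> 'd \<Rightarrow> 'd \<Rightarrow> real) \<Rightarrow> ('d \<Rightarrow> 'd \<Rightarrow> real) \<Rightarrow> 'd \<Rightarrow> 'd \<Rightarrow> 'a \<Rightarrow> real" where
  "Lf X \<alpha> \<beta> i j = (\<lambda>\<omega>. (\<Sum>k\<in>UNIV. \<alpha> i j k * X k \<omega>) + \<beta> i j)"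

fun Dw :: "('d::finite \<Rightarrow> 'a \<Rightarrow> real) \<Rightarrow> ('d \<Rightarrow> 'd \<Rightarrow> 'd \<Rightarrow> real) \<Rightarrow> ('d \<Rightarrow> 'd \<Rightarrow> real) \<Rightarrow> 'd \<Rightarrow> 'd list \<Rightarrow> 'a \<Rightarrow> real" where
  "Dw X \<alpha> \<beta> i [] = (\<lambda>\<omega>. 0)"
| "Dw X \<alpha> \<beta> i (j # js) = (\<lambda>\<omega>. X j \<omega> * Dw X \<alpha> \<beta> i js \<omega> + Lf X \<alpha> \<beta> i j \<omega> * pX X js \<omega>)"

lemma pX_RP: "pX X js \<in> RP X"
  unfolding pX_def by (rule RP_prod_list)

lemma pX_Nil[simp]: "pX X [] = (\<lambda>\<omega>. 1)" by (simp add: pX_def)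
lemma pX_Cons[simp]: "pX X (j # js) \<omega> = X j \<omega> * pX X js \<omega>" by (simp add: pX_def)
lemma pX_Cons_fun: "pX X (j # js) = (\<lambda>\<omega>. X j \<omega> * pX X js \<omega>)" by (simp add: pX_def fun_eq_iff)
lemma pX_append: "pX X (xs @ ys) \<omega> = pX X xs \<omega> * pX X ys \<omega>" by (simp add: pX_def)

lemma Lf_RP: "Lf X \<alpha> \<beta> i j \<in> RP X"
  unfolding Lf_def by (intro RPadd RP_sum RP_scale RPX RPc) auto

lemma Dw_RP: "Dw X \<alpha> \<beta> i js \<in> RP X"
  by (induction js) (auto intro!: RPadd RPmul RPX RPc Lf_RP pX_RP)

locale mx1 = mx0 M X for M :: "'a measure" and X :: "'d::finite \<Rightarrow> 'a \<Rightarrow> real" +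
  fixes \<alpha> :: "'d \<Rightarrow> 'd \<Rightarrow> 'd \<Rightarrow> real" and \<beta> :: "'d \<Rightarrow> 'd \<Rightarrow> real"
  assumes meix: "meixner1 M X \<alpha> \<beta>"
    and cov: "\<And>i j. integral\<^sup>L M (\<lambda>\<omega>. X i \<omega> * X j \<omega>) = (if i = j then 1 else 0)"
begin

definition pc :: "'d list \<Rightarrow> 'a \<Rightarrow> complex" where
  "pc js = (\<lambda>\<omega>. complex_of_real (pX X js \<omega>))"

lemma pc_Nil: "pc [] = (\<lambda>\<omega>. 1)" by (simp add: pc_def)
lemma pc_Cons: "pc (j # js) = mulX X j (pc js)" by (simp add: pc_def mulX_def fun_eq_iff)

lemma pc_polyAll: "pc js \<in> polyAll X"
  by (induction js) (auto simp: pc_Nil pc_Cons intro: const_polyAll mulX_polyAll)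

lemma U_word: "AE \<omega> in M. Uop M X i (pc js) \<omega> = complex_of_real (Dw X \<alpha> \<beta> i js \<omega>)"
proof (induction js)
  case Nil
  then show ?case by (simp add: pc_Nil U_one)
next
  case (Cons j js)
  have m: "AE \<omega> in M. Uop M X i (mulX X j (pc js)) \<omega> - mulX X j (Uop M X i (pc js)) \<omega>
      = (\<Sum>k\<in>UNIV. complex_of_real (\<alpha> i j k) * mulX X k (pc js) \<omega>) + complex_of_real (\<beta> i j) * pc js \<omega>"
    using meix pc_polyAll unfolding meixner1_def by blast
  from m Cons.IH show ?case
  proof eventually_elim
    case (elim \<omega>)
    have "Uop M X i (pc (j # js)) \<omega> = mulX X j (Uop M X i (pc js)) \<omega> +
      ((\<Sum>k\<in>UNIV. complex_of_real (\<alpha> i j k) * mulX X k (pc js) \<omega>) + complex_of_real (\<beta> i j) * pc js \<omega>)"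
      using elim(1) unfolding pc_Cons by (simp add: algebra_simps)
    also have "\<dots> = complex_of_real (X j \<omega> * Dw X \<alpha> \<beta> i js \<omega> + Lf X \<alpha> \<beta> i j \<omega> * pX X js \<omega>)"
    proof -
      have "(\<Sum>k\<in>UNIV. complex_of_real (\<alpha> i j k) * mulX X k (pc js) \<omega>)
          = complex_of_real ((\<Sum>k\<in>UNIV. \<alpha> i j k * X k \<omega>) * pX X js \<omega>)"
        by (simp add: mulX_def pc_def sum_distrib_right sum_distrib_left mult_ac)
      thus ?thesis using elim(2) by (simp add: mulX_def pc_def Lf_def distrib_right)
    qed
    finally show ?case by simp
  qed
qed

lemma E_word: "integral\<^sup>L M (\<lambda>\<omega>. X i \<omega> * pX X js \<omega>) = integral\<^sup>L M (Dw X \<alpha> \<beta> i js)"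
proof -
  have "complex_of_real (integral\<^sup>L M (\<lambda>\<omega>. X i \<omega> * pX X js \<omega>)) = integral\<^sup>L M (mulX X i (pc js))"
    by (simp only: mulX_def pc_def of_real_mult[symmetric] integral_complex_of_real)
  also have "\<dots> = integral\<^sup>L M (Uop M X i (pc js))" by (rule U_mean[OF pc_polyAll, symmetric])
  also have "\<dots> = integral\<^sup>L M (\<lambda>\<omega>. complex_of_real (Dw X \<alpha> \<beta> i js \<omega>))"
    by (rule integral_cong_AE[OF poly_meas[OF Uop_polyAll[OF pc_polyAll]] _ U_word])
       (use RP_meas[OF Dw_RP] in measurable)
  also have "\<dots> = complex_of_real (integral\<^sup>L M (Dw X \<alpha> \<beta> i js))" by simp
  finally show ?thesis by simp
qed

lemma beta_delta: "\<beta> i j = (if i = j then 1 else 0)"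
proof -
  have "integral\<^sup>L M (\<lambda>\<omega>. X i \<omega> * X j \<omega>) = integral\<^sup>L M (Dw X \<alpha> \<beta> i [j])"
    using E_word[of i "[j]"] by simp
  also have "Dw X \<alpha> \<beta> i [j] = (\<lambda>\<omega>. (\<Sum>k\<in>UNIV. \<alpha> i j k * X k \<omega>) + \<beta> i j)"
    by (simp add: Lf_def fun_eq_iff)
  also have "integral\<^sup>L M \<dots> = (\<Sum>k\<in>UNIV. \<alpha> i j k * integral\<^sup>L M (X k)) + \<beta> i j"
  proof -
    have ik: "integrable M (X k)" for k using RP_int[OF RPX] .
    have "integral\<^sup>L M (\<lambda>\<omega>. (\<Sum>k\<in>UNIV. \<alpha> i j k * X k \<omega>) + \<beta> i j) = integral\<^sup>L M (\<lambda>\<omega>. \<Sum>k\<in>UNIV. \<alpha> i j k * X k \<omega>) + \<beta> i j"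
      using ik by (subst Bochner_Integration.integral_add) (auto simp: prob_space)
    also have "integral\<^sup>L M (\<lambda>\<omega>. \<Sum>k\<in>UNIV. \<alpha> i j k * X k \<omega>) = (\<Sum>k\<in>UNIV. \<alpha> i j k * integral\<^sup>L M (X k))"
      using ik by (subst Bochner_Integration.integral_sum) auto
    finally show ?thesis .
  qed
  also have "\<dots> = \<beta> i j" using mean0 by simp
  finally show ?thesis using cov[of i j] by simp
qed

definition Aa :: real where "Aa = (\<Sum>i\<in>UNIV. \<Sum>j\<in>UNIV. \<Sum>k\<in>UNIV. \<bar>\<alpha> i j k\<bar>)"

lemma Aa_nonneg: "Aa \<ge> 0" unfolding Aa_def by (intro sum_nonneg) auto

lemma Aa_ge: "(\<Sum>k\<in>UNIV. \<bar>\<alpha> i j k\<bar>) \<le> Aa"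
proof -
  have "(\<Sum>k\<in>UNIV. \<bar>\<alpha> i j k\<bar>) \<le> (\<Sum>j\<in>UNIV. \<Sum>k\<in>UNIV. \<bar>\<alpha> i j k\<bar>)"
    by (rule member_le_sum[where f="\<lambda>j. \<Sum>k\<in>UNIV. \<bar>\<alpha> i j k\<bar>"]) (auto intro: sum_nonneg)
  also have "\<dots> \<le> Aa" unfolding Aa_def
    by (rule member_le_sum[where f="\<lambda>i. \<Sum>j\<in>UNIV. \<Sum>k\<in>UNIV. \<bar>\<alpha> i j k\<bar>"]) (auto intro: sum_nonneg)
  finally show ?thesis .
qed

definition mu :: "'d list \<Rightarrow> real" where "mu ws = integral\<^sup>L M (pX X ws)"

lemma pX_int: "integrable M (pX X ws)" by (rule RP_int[OF pX_RP])

lemma Dbound: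
  assumes b1: "\<And>ws. length ws = N \<Longrightarrow> \<bar>mu ws\<bar> \<le> b1" and b0: "\<And>ws. length ws = N - 1 \<Longrightarrow> \<bar>mu ws\<bar> \<le> b0"
    and b1p: "b1 \<ge> 0" and b0p: "b0 \<ge> 0"
  shows "length ps + length js = N \<Longrightarrow> \<bar>integral\<^sup>L M (\<lambda>\<omega>. pX X ps \<omega> * Dw X \<alpha> \<beta> i js \<omega>)\<bar> \<le> real (length js) * (Aa * b1 + b0)"
proof (induction js arbitrary: ps)
  case Nil
  then show ?case by simp
next
  case (Cons j js)
  have e1: "(\<lambda>\<omega>. pX X ps \<omega> * Dw X \<alpha> \<beta> i (j # js) \<omega>) =
    (\<lambda>\<omega>. pX X (ps @ [j]) \<omega> * Dw X \<alpha> \<beta> i js \<omega> +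
       ((\<Sum>k\<in>UNIV. \<alpha> i j k * pX X (ps @ k # js) \<omega>) + \<beta> i j * pX X (ps @ js) \<omega>))"
    by (simp add: pX_append Lf_def sum_distrib_left sum_distrib_right algebra_simps)
  have i1: "integrable M (\<lambda>\<omega>. pX X (ps @ [j]) \<omega> * Dw X \<alpha> \<beta> i js \<omega>)"
    by (intro RP_int RPmul pX_RP Dw_RP)
  have i2: "integrable M (\<lambda>\<omega>. (\<Sum>k\<in>UNIV. \<alpha> i j k * pX X (ps @ k # js) \<omega>) + \<beta> i j * pX X (ps @ js) \<omega>)"
    by (intro RP_int RPadd RP_sum RP_scale pX_RP) auto
  have e2: "integral\<^sup>L M (\<lambda>\<omega>. (\<Sum>k\<in>UNIV. \<alpha> i j k * pX X (ps @ k # js) \<omega>) + \<beta> i j * pX X (ps @ js) \<omega>)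
     = (\<Sum>k\<in>UNIV. \<alpha> i j k * mu (ps @ k # js)) + \<beta> i j * mu (ps @ js)"
  proof -
    have ik: "integrable M (\<lambda>\<omega>. \<alpha> i j k * pX X (ps @ k # js) \<omega>)" for k
      by (intro RP_int RP_scale pX_RP)
    have "integral\<^sup>L M (\<lambda>\<omega>. (\<Sum>k\<in>UNIV. \<alpha> i j k * pX X (ps @ k # js) \<omega>) + \<beta> i j * pX X (ps @ js) \<omega>)
      = integral\<^sup>L M (\<lambda>\<omega>. \<Sum>k\<in>UNIV. \<alpha> i j k * pX X (ps @ k # js) \<omega>) + integral\<^sup>L M (\<lambda>\<omega>. \<beta> i j * pX X (ps @ js) \<omega>)"
      by (rule Bochner_Integration.integral_add) (use ik in \<open>auto intro!: RP_int RP_scale pX_RP\<close>)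
    also have "integral\<^sup>L M (\<lambda>\<omega>. \<Sum>k\<in>UNIV. \<alpha> i j k * pX X (ps @ k # js) \<omega>) = (\<Sum>k\<in>UNIV. integral\<^sup>L M (\<lambda>\<omega>. \<alpha> i j k * pX X (ps @ k # js) \<omega>))"
      by (rule Bochner_Integration.integral_sum) (rule ik)
    finally show ?thesis unfolding mu_def by simp
  qed
  have IH: "\<bar>integral\<^sup>L M (\<lambda>\<omega>. pX X (ps @ [j]) \<omega> * Dw X \<alpha> \<beta> i js \<omega>)\<bar> \<le> real (length js) * (Aa * b1 + b0)"
    using Cons by simp
  have "\<bar>(\<Sum>k\<in>UNIV. \<alpha> i j k * mu (ps @ k # js)) + \<beta> i j * mu (ps @ js)\<bar>
     \<le> (\<Sum>k\<in>UNIV. \<bar>\<alpha> i j k\<bar> * b1) + 1 * b0"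
  proof -
    have "\<bar>(\<Sum>k\<in>UNIV. \<alpha> i j k * mu (ps @ k # js))\<bar> \<le> (\<Sum>k\<in>UNIV. \<bar>\<alpha> i j k * mu (ps @ k # js)\<bar>)"
      by (rule sum_abs)
    also have "\<dots> \<le> (\<Sum>k\<in>UNIV. \<bar>\<alpha> i j k\<bar> * b1)"
      by (rule sum_mono) (use b1 Cons.prems in \<open>auto simp: abs_mult intro!: mult_left_mono\<close>)
    finally have s1: "\<bar>(\<Sum>k\<in>UNIV. \<alpha> i j k * mu (ps @ k # js))\<bar> \<le> (\<Sum>k\<in>UNIV. \<bar>\<alpha> i j k\<bar> * b1)" .
    have "\<bar>\<beta> i j * mu (ps @ js)\<bar> \<le> 1 * b0"
      unfolding abs_mult using b0[of "ps @ js"] Cons.prems b0p beta_delta[of i j]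
      by (auto intro!: mult_mono)
    with s1 show ?thesis by (smt (verit))
  qed
  also have "\<dots> \<le> Aa * b1 + b0"
    using Aa_ge[of i j] b1p by (simp add: sum_distrib_right[symmetric] mult_right_mono)
  finally have s2: "\<bar>(\<Sum>k\<in>UNIV. \<alpha> i j k * mu (ps @ k # js)) + \<beta> i j * mu (ps @ js)\<bar> \<le> Aa * b1 + b0" .
  have "integral\<^sup>L M (\<lambda>\<omega>. pX X ps \<omega> * Dw X \<alpha> \<beta> i (j # js) \<omega>) =
     integral\<^sup>L M (\<lambda>\<omega>. pX X (ps @ [j]) \<omega> * Dw X \<alpha> \<beta> i js \<omega>) +
     ((\<Sum>k\<in>UNIV. \<alpha> i j k * mu (ps @ k # js)) + \<beta> i j * mu (ps @ js))"
    unfolding e1 e2[symmetric] by (rule Bochner_Integration.integral_add[OF i1 i2])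
  with IH s2 show ?case by (simp add: algebra_simps)
qed

definition Cc :: real where "Cc = Aa + 1"

lemma Cc_ge: "Cc \<ge> 1" "Cc \<ge> Aa" unfolding Cc_def using Aa_nonneg by auto

lemma fC_nonneg: "0 \<le> (fact k :: real) * Cc ^ k"
  using Cc_ge(1) by (intro mult_nonneg_nonneg) auto

lemma mu_Nil: "mu [] = 1" by (simp add: mu_def prob_space)

lemma mu_Cons: "mu (i # js) = integral\<^sup>L M (\<lambda>\<omega>. pX X [] \<omega> * Dw X \<alpha> \<beta> i js \<omega>)"
  unfolding mu_def pX_Cons_fun using E_word[of i js] by simp

lemma ineq_aux:
  fixes A C :: real assumes "C \<ge> 1" "C \<ge> A" "A \<ge> 0"
  shows "real n * (A * (fact n * C ^ n) + fact (n - 1) * C ^ (n - 1)) \<le> fact (Suc n) * C ^ Suc n"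
proof (cases n)
  case 0 thus ?thesis using assms by simp
next
  case (Suc m)
  have f: "real (Suc m) * fact m = fact (Suc m)" by simp
  have "real n * (A * (fact n * C ^ n) + fact (n - 1) * C ^ (n - 1))
      = fact (Suc m) * C ^ m * (real (Suc m) * A * C + 1)"
    unfolding Suc using f by (simp add: algebra_simps)
  also have "\<dots> \<le> fact (Suc m) * C ^ m * (real (Suc (Suc m)) * C * C)"
  proof -
    have "real (Suc m) * A * C \<le> real (Suc m) * C * C"
      using assms by (intro mult_mono) auto
    moreover have "1 * 1 \<le> C * C" using assms by (intro mult_mono) auto
    ultimately have "real (Suc m) * A * C + 1 \<le> real (Suc (Suc m)) * C * C" by (simp add: algebra_simps)
    thus ?thesis using assms by (intro mult_left_mono) auto
  qed
  also have "\<dots> = fact (Suc n) * C ^ Suc n" unfolding Suc by (simp add: algebra_simps)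
  finally show ?thesis .
qed

lemma mu_bound: "length ws = n \<Longrightarrow> \<bar>mu ws\<bar> \<le> fact n * Cc ^ n"
proof (induction n arbitrary: ws rule: less_induct)
  case (less n)
  show ?case
  proof (cases ws)
    case Nil
    then show ?thesis using less mu_Nil by simp
  next
    case (Cons i js)
    define m where "m = length js"
    have n: "n = Suc m" using less Cons m_def by simp
    have "\<bar>mu ws\<bar> \<le> real (length js) * (Aa * (fact m * Cc ^ m) + fact (m - 1) * Cc ^ (m - 1))"
      unfolding Cons mu_Cons
    proof (rule Dbound[where N=m])
      show "\<bar>mu ws'\<bar> \<le> fact m * Cc ^ m" if "length ws' = m" for ws'
        by (rule less.IH) (use that n in auto)
      show "\<bar>mu ws'\<bar> \<le> fact (m - 1) * Cc ^ (m - 1)" if "length ws' = m - 1" for ws'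
        by (rule less.IH) (use that n in auto)
    qed (auto simp: m_def intro: fC_nonneg)
    also have "\<dots> \<le> fact n * Cc ^ n"
      unfolding n m_def[symmetric] by (rule ineq_aux) (use Cc_ge Aa_nonneg in auto)
    finally show ?thesis .
  qed
qed

end


fun SW :: "nat \<Rightarrow> ('d::finite list \<Rightarrow> 'b::comm_monoid_add) \<Rightarrow> 'b" where
  "SW 0 F = F []"
| "SW (Suc n) F = (\<Sum>j\<in>UNIV. SW n (\<lambda>js. F (j # js)))"

lemma SW_mult: "SW n (\<lambda>js. c * F js) = (c::'b::comm_ring) * SW n F"
  by (induction n arbitrary: F) (auto simp: sum_distrib_left)

lemma SW_add: "SW n (\<lambda>js. F js + G js) = SW n F + SW n G"
  by (induction n arbitrary: F G) (auto simp: sum.distrib)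

lemma SW_mono: "(\<And>js. length js = n \<Longrightarrow> F js \<le> G js) \<Longrightarrow> SW n F \<le> (SW n G :: 'b::ordered_comm_monoid_add)"
proof (induction n arbitrary: F G)
  case 0 thus ?case by simp
next
  case (Suc n)
  show ?case by simp (rule sum_mono, rule Suc.IH, rule Suc.prems, simp)
qed

lemma SW_abs: "\<bar>SW n F\<bar> \<le> SW n (\<lambda>js. \<bar>F js\<bar> :: real)"
proof (induction n arbitrary: F)
  case 0 thus ?case by simp
next
  case (Suc n)
  have "\<bar>SW (Suc n) F\<bar> \<le> (\<Sum>j\<in>UNIV. \<bar>SW n (\<lambda>js. F (j # js))\<bar>)" by (simp add: sum_abs)
  also have "\<dots> \<le> (\<Sum>j\<in>UNIV. SW n (\<lambda>js. \<bar>F (j # js)\<bar>))" by (rule sum_mono) (rule Suc.IH)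
  finally show ?case by simp
qed

lemma SW_prod: fixes a :: "'d::finite \<Rightarrow> real" shows "SW n (\<lambda>js. prod_list (map a js)) = (\<Sum>j\<in>UNIV. a j) ^ n"
proof (induction n)
  case 0 thus ?case by simp
next
  case (Suc n)
  have "SW (Suc n) (\<lambda>js. prod_list (map a js)) = (\<Sum>j\<in>UNIV. a j * SW n (\<lambda>js. prod_list (map a js)))"
    by (simp add: SW_mult)
  also have "\<dots> = (\<Sum>j\<in>UNIV. a j) ^ Suc n" by (simp add: Suc sum_distrib_right)
  finally show ?case .
qed

lemma prod_list_map_mult: fixes f g :: "'x \<Rightarrow> real" shows "prod_list (map (\<lambda>j. f j * g j) js) = prod_list (map f js) * prod_list (map g js)"
  by (induction js) (auto simp: mult_ac)

definition tX :: "('d::finite \<Rightarrow> 'a \<Rightarrow> real) \<Rightarrow> ('d \<Rightarrow> real) \<Rightarrow> 'a \<Rightarrow> real" where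
  "tX X t = (\<lambda>\<omega>. \<Sum>k\<in>UNIV. t k * X k \<omega>)"

definition tprod :: "('d \<Rightarrow> real) \<Rightarrow> 'd list \<Rightarrow> real" where
  "tprod t js = prod_list (map t js)"

definition nt :: "('d::finite \<Rightarrow> real) \<Rightarrow> real" where
  "nt t = (\<Sum>j\<in>UNIV. \<bar>t j\<bar>)"

lemma tX_pow_SW: "tX X t \<omega> ^ n = SW n (\<lambda>js. tprod t js * pX X js \<omega>)"
proof -
  have "tX X t \<omega> ^ n = SW n (\<lambda>js. prod_list (map (\<lambda>j. t j * X j \<omega>) js))"
    unfolding tX_def by (rule SW_prod[symmetric])
  also have "\<dots> = SW n (\<lambda>js. tprod t js * pX X js \<omega>)"
    unfolding tprod_def pX_def prod_list_map_mult ..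
  finally show ?thesis .
qed

lemma tX_RP: "tX X t \<in> RP X"
  unfolding tX_def by (intro RP_sum RP_scale RPX) auto

lemma SW_integral:
  assumes "\<And>js. integrable M (F js)"
  shows "integrable M (\<lambda>\<omega>. SW n (\<lambda>js. F js \<omega>)) \<and> integral\<^sup>L M (\<lambda>\<omega>. SW n (\<lambda>js. F js \<omega>)) = SW n (\<lambda>js. integral\<^sup>L M (F js) :: real)"
  using assms
proof (induction n arbitrary: F)
  case 0 thus ?case by simp
next
  case (Suc n)
  have IH: "integrable M (\<lambda>\<omega>. SW n (\<lambda>js. F (j # js) \<omega>)) \<and> integral\<^sup>L M (\<lambda>\<omega>. SW n (\<lambda>js. F (j # js) \<omega>)) = SW n (\<lambda>js. integral\<^sup>L M (F (j # js)))" for j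
    by (rule Suc.IH) (rule Suc.prems)
  show ?case using IH by (simp add: Bochner_Integration.integral_sum)
qed

context mx1 begin

lemma tprod_abs: "\<bar>tprod t js\<bar> = tprod (\<lambda>j. \<bar>t j\<bar>) js"
  unfolding tprod_def by (induction js) (auto simp: abs_mult)

lemma E_pow: "integral\<^sup>L M (\<lambda>\<omega>. tX X t \<omega> ^ n) = SW n (\<lambda>js. tprod t js * mu js)"
proof -
  have "integral\<^sup>L M (\<lambda>\<omega>. tX X t \<omega> ^ n) = integral\<^sup>L M (\<lambda>\<omega>. SW n (\<lambda>js. tprod t js * pX X js \<omega>))"
    by (simp add: tX_pow_SW)
  also have "\<dots> = SW n (\<lambda>js. integral\<^sup>L M (\<lambda>\<omega>. tprod t js * pX X js \<omega>))"
    by (rule conjunct2[OF SW_integral]) (simp add: pX_int)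
  also have "\<dots> = SW n (\<lambda>js. tprod t js * mu js)" by (simp add: mu_def)
  finally show ?thesis .
qed

lemma mom_bound: "\<bar>integral\<^sup>L M (\<lambda>\<omega>. tX X t \<omega> ^ n)\<bar> \<le> fact n * (Cc * nt t) ^ n"
proof -
  have "\<bar>integral\<^sup>L M (\<lambda>\<omega>. tX X t \<omega> ^ n)\<bar> \<le> SW n (\<lambda>js. \<bar>tprod t js * mu js\<bar>)"
    unfolding E_pow by (rule SW_abs)
  also have "\<dots> \<le> SW n (\<lambda>js. (fact n * Cc ^ n) * tprod (\<lambda>j. \<bar>t j\<bar>) js)"
  proof (rule SW_mono)
    fix js :: "'d list" assume "length js = n"
    hence "\<bar>mu js\<bar> \<le> fact n * Cc ^ n" by (rule mu_bound)
    moreover have "tprod (\<lambda>j. \<bar>t j\<bar>) js \<ge> 0" unfolding tprod_abs[symmetric] by simp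
    ultimately have "\<bar>mu js\<bar> * tprod (\<lambda>j. \<bar>t j\<bar>) js \<le> (fact n * Cc ^ n) * tprod (\<lambda>j. \<bar>t j\<bar>) js"
      by (rule mult_right_mono)
    thus "\<bar>tprod t js * mu js\<bar> \<le> (fact n * Cc ^ n) * tprod (\<lambda>j. \<bar>t j\<bar>) js"
      by (simp add: abs_mult tprod_abs mult.commute)
  qed
  also have "\<dots> = (fact n * Cc ^ n) * (nt t) ^ n"
    unfolding SW_mult tprod_def nt_def SW_prod ..
  also have "\<dots> = fact n * (Cc * nt t) ^ n" by (simp add: power_mult_distrib)
  finally show ?thesis .
qed

lemma pow_int: "integrable M (\<lambda>\<omega>. tX X t \<omega> ^ n)"
  by (intro RP_int RP_power tX_RP)

lemma exp_abs_int:
  assumes small: "Cc * nt t < 1"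
  shows "integrable M (\<lambda>\<omega>. exp \<bar>tX X t \<omega>\<bar>)"
proof -
  define f where "f = (\<lambda>n \<omega>. (tX X t \<omega> ^ n + (- tX X t \<omega>) ^ n) / fact n)"
  have fnn: "f n \<omega> \<ge> 0" for n \<omega>
  proof (cases "even n")
    case True thus ?thesis by (simp add: f_def zero_le_even_power)
  next
    case False thus ?thesis by (simp add: f_def)
  qed
  have fs: "(\<lambda>n. f n \<omega>) sums (exp (tX X t \<omega>) + exp (- tX X t \<omega>))" for \<omega>
    unfolding f_def using sums_add[OF exp_converges[of "tX X t \<omega>"] exp_converges[of "- tX X t \<omega>"]]
    by (simp add: add_divide_distrib divide_inverse mult.commute distrib_left)
  have mt: "(\<lambda>\<omega>. - tX X t \<omega>) \<in> RP X" using RP_scale[OF tX_RP, of "-1" X t] by simp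
  have fi: "integrable M (f n)" for n
  proof -
    have "(\<lambda>\<omega>. inverse (fact n) * (tX X t \<omega> ^ n + (- tX X t \<omega>) ^ n)) \<in> RP X"
      by (intro RP_scale RPadd RP_power tX_RP mt)
    hence ii: "integrable M (\<lambda>\<omega>. inverse (fact n) * (tX X t \<omega> ^ n + (- tX X t \<omega>) ^ n))" by (rule RP_int)
    have eq: "f n = (\<lambda>\<omega>. inverse (fact n) * (tX X t \<omega> ^ n + (- tX X t \<omega>) ^ n))"
      unfolding f_def divide_inverse_commute ..
    show ?thesis unfolding eq by (rule ii)
  qed
  have Ef: "integral\<^sup>L M (f n) \<le> 2 * (Cc * nt t) ^ n" for n
  proof -
    define I where "I = integral\<^sup>L M (\<lambda>\<omega>. tX X t \<omega> ^ n)"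
    have p: "f n = (\<lambda>\<omega>. (tX X t \<omega> ^ n + (-1) ^ n * tX X t \<omega> ^ n) / fact n)"
      unfolding f_def by (simp only: power_minus[of "tX X t _"])
    have i2: "integrable M (\<lambda>\<omega>. (-1::real) ^ n * tX X t \<omega> ^ n)"
      by (rule integrable_mult_right) (rule pow_int)
    have "integral\<^sup>L M (f n) = integral\<^sup>L M (\<lambda>\<omega>. tX X t \<omega> ^ n + (-1) ^ n * tX X t \<omega> ^ n) / fact n"
      unfolding p by (rule integral_divide_zero)
    also have "integral\<^sup>L M (\<lambda>\<omega>. tX X t \<omega> ^ n + (-1) ^ n * tX X t \<omega> ^ n) = I + (-1) ^ n * I"
      unfolding I_def by (subst Bochner_Integration.integral_add[OF pow_int i2]) (simp only: integral_mult_right_zero)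
    also have "I + (-1) ^ n * I \<le> 2 * \<bar>I\<bar>"
      by (cases "even n") auto
    finally have "integral\<^sup>L M (f n) \<le> 2 * \<bar>I\<bar> / fact n" by (simp add: divide_right_mono)
    also have "\<dots> \<le> 2 * (fact n * (Cc * nt t) ^ n) / fact n"
      using mom_bound[of t n] unfolding I_def by (intro divide_right_mono) auto
    also have "\<dots> = 2 * (Cc * nt t) ^ n" by simp
    finally show ?thesis .
  qed
  have nt0: "nt t \<ge> 0" unfolding nt_def by (simp add: sum_nonneg)
  have C0: "Cc * nt t \<ge> 0" using Cc_ge nt0 by simp
  have sumI: "summable (\<lambda>n. integral\<^sup>L M (\<lambda>\<omega>. norm (f n \<omega>)))"
  proof (rule summable_comparison_test[where g="\<lambda>n. 2 * (Cc * nt t) ^ n"])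
    show "\<exists>N. \<forall>n\<ge>N. norm (integral\<^sup>L M (\<lambda>\<omega>. norm (f n \<omega>))) \<le> 2 * (Cc * nt t) ^ n"
    proof (intro exI allI impI)
      fix n
      have "integral\<^sup>L M (\<lambda>\<omega>. norm (f n \<omega>)) = integral\<^sup>L M (f n)" using fnn by simp
      moreover have "integral\<^sup>L M (f n) \<ge> 0" by (rule integral_nonneg_AE) (use fnn in auto)
      ultimately show "norm (integral\<^sup>L M (\<lambda>\<omega>. norm (f n \<omega>))) \<le> 2 * (Cc * nt t) ^ n" using Ef[of n] by simp
    qed
    show "summable (\<lambda>n. 2 * (Cc * nt t) ^ n)"
      by (rule summable_mult, rule summable_geometric) (use small C0 in auto)
  qed
  have "integrable M (\<lambda>\<omega>. \<Sum>n. f n \<omega>)"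
    by (rule integrable_suminf[OF fi _ sumI]) (use fs fnn in \<open>auto simp: sums_iff\<close>)
  moreover have "(\<lambda>\<omega>. \<Sum>n. f n \<omega>) = (\<lambda>\<omega>. exp (tX X t \<omega>) + exp (- tX X t \<omega>))"
    using fs sums_unique by (metis)
  ultimately have ii: "integrable M (\<lambda>\<omega>. exp (tX X t \<omega>) + exp (- tX X t \<omega>))" by simp
  show ?thesis
  proof (rule Bochner_Integration.integrable_bound[OF ii])
    show "(\<lambda>\<omega>. exp \<bar>tX X t \<omega>\<bar>) \<in> borel_measurable M"
      using RP_meas[OF tX_RP] by measurable
    show "AE \<omega> in M. norm (exp \<bar>tX X t \<omega>\<bar>) \<le> norm (exp (tX X t \<omega>) + exp (- tX X t \<omega>))"
    proof (intro AE_I2)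
      fix \<omega>
      have a: "exp (tX X t \<omega>) > 0" "exp (- tX X t \<omega>) > 0" by auto
      have "exp \<bar>tX X t \<omega>\<bar> \<le> exp (tX X t \<omega>) + exp (- tX X t \<omega>)"
        using a by (cases "tX X t \<omega> < 0") auto
      thus "norm (exp \<bar>tX X t \<omega>\<bar>) \<le> norm (exp (tX X t \<omega>) + exp (- tX X t \<omega>))"
        using a by simp
    qed
  qed
qed

end


definition Lt :: "('d::finite \<Rightarrow> 'a \<Rightarrow> real) \<Rightarrow> ('d \<Rightarrow> 'd \<Rightarrow> 'd \<Rightarrow> real) \<Rightarrow> ('d \<Rightarrow> 'd \<Rightarrow> real) \<Rightarrow> 'd \<Rightarrow> ('d \<Rightarrow> real) \<Rightarrow> 'a \<Rightarrow> real" where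
  "Lt X \<alpha> \<beta> i t = (\<lambda>\<omega>. \<Sum>j\<in>UNIV. t j * Lf X \<alpha> \<beta> i j \<omega>)"

lemma sum_two: "(\<Sum>j\<in>A. a j * c + b j * d) = (\<Sum>j\<in>A. a j) * c + (\<Sum>j\<in>A. b j) * (d::real)"
  by (simp add: sum.distrib sum_distrib_right)

lemma tprod_Cons: "tprod t (j # js) = t j * tprod t js" by (simp add: tprod_def)

lemma SW_tpX: "SW n (\<lambda>js. tprod t js * pX X js \<omega>) = tX X t \<omega> ^ n"
  using tX_pow_SW[symmetric] .

lemma SW_Dw: "SW n (\<lambda>js. tprod t js * Dw X \<alpha> \<beta> i js \<omega>) = real n * tX X t \<omega> ^ (n - 1) * Lt X \<alpha> \<beta> i t \<omega>"
proof (induction n)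
  case 0 thus ?case by (simp add: tprod_def)
next
  case (Suc n)
  have "SW (Suc n) (\<lambda>js. tprod t js * Dw X \<alpha> \<beta> i js \<omega>) =
    (\<Sum>j\<in>UNIV. SW n (\<lambda>js. (t j * X j \<omega>) * (tprod t js * Dw X \<alpha> \<beta> i js \<omega>) + (t j * Lf X \<alpha> \<beta> i j \<omega>) * (tprod t js * pX X js \<omega>)))"
    by (simp add: tprod_Cons algebra_simps)
  also have "\<dots> = (\<Sum>j\<in>UNIV. (t j * X j \<omega>) * (real n * tX X t \<omega> ^ (n - 1) * Lt X \<alpha> \<beta> i t \<omega>) + (t j * Lf X \<alpha> \<beta> i j \<omega>) * tX X t \<omega> ^ n)"
    by (simp only: SW_add SW_mult Suc SW_tpX)
  also have "\<dots> = tX X t \<omega> * (real n * tX X t \<omega> ^ (n - 1)) * Lt X \<alpha> \<beta> i t \<omega> + Lt X \<alpha> \<beta> i t \<omega> * tX X t \<omega> ^ n"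
    unfolding sum_two tX_def Lt_def by (simp add: mult_ac)
  also have "tX X t \<omega> * (real n * tX X t \<omega> ^ (n - 1)) = real n * tX X t \<omega> ^ n"
    by (cases n) auto
  finally show ?case by (simp add: algebra_simps)
qed

context mx1 begin

lemma E_Xpow: "integral\<^sup>L M (\<lambda>\<omega>. X i \<omega> * tX X t \<omega> ^ n) = integral\<^sup>L M (\<lambda>\<omega>. real n * tX X t \<omega> ^ (n - 1) * Lt X \<alpha> \<beta> i t \<omega>)"
proof -
  have "integral\<^sup>L M (\<lambda>\<omega>. X i \<omega> * tX X t \<omega> ^ n) = integral\<^sup>L M (\<lambda>\<omega>. SW n (\<lambda>js. tprod t js * (X i \<omega> * pX X js \<omega>)))"
    by (simp add: tX_pow_SW SW_mult[symmetric] algebra_simps)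
  also have "\<dots> = SW n (\<lambda>js. integral\<^sup>L M (\<lambda>\<omega>. tprod t js * (X i \<omega> * pX X js \<omega>)))"
    by (rule conjunct2[OF SW_integral]) (intro integrable_mult_right RP_int RPmul RPX pX_RP)
  also have "\<dots> = SW n (\<lambda>js. integral\<^sup>L M (\<lambda>\<omega>. tprod t js * Dw X \<alpha> \<beta> i js \<omega>))"
    by (simp add: E_word)
  also have "\<dots> = integral\<^sup>L M (\<lambda>\<omega>. SW n (\<lambda>js. tprod t js * Dw X \<alpha> \<beta> i js \<omega>))"
    by (rule conjunct2[OF SW_integral, symmetric]) (intro integrable_mult_right RP_int Dw_RP)
  also have "\<dots> = integral\<^sup>L M (\<lambda>\<omega>. real n * tX X t \<omega> ^ (n - 1) * Lt X \<alpha> \<beta> i t \<omega>)"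
    by (simp add: SW_Dw)
  finally show ?thesis .
qed

lemma Lt_eq: "Lt X \<alpha> \<beta> i t \<omega> = (\<Sum>k\<in>UNIV. (\<Sum>j\<in>UNIV. t j * \<alpha> i j k) * X k \<omega>) + t i"
proof -
  have "Lt X \<alpha> \<beta> i t \<omega> = (\<Sum>j\<in>UNIV. \<Sum>k\<in>UNIV. t j * \<alpha> i j k * X k \<omega>) + (\<Sum>j\<in>UNIV. t j * \<beta> i j)"
    unfolding Lt_def Lf_def by (simp add: sum.distrib distrib_left sum_distrib_left mult.assoc)
  also have "(\<Sum>j\<in>UNIV. t j * \<beta> i j) = t i"
    by (simp add: beta_delta if_distrib cong: if_cong)
  also have "(\<Sum>j\<in>UNIV. \<Sum>k\<in>UNIV. t j * \<alpha> i j k * X k \<omega>) = (\<Sum>k\<in>UNIV. (\<Sum>j\<in>UNIV. t j * \<alpha> i j k) * X k \<omega>)"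
    by (subst sum.swap) (simp add: sum_distrib_right)
  finally show ?thesis .
qed

end


lemma exp_ge_lin: "0 \<le> (y::real) \<Longrightarrow> y \<le> exp y"
  using exp_ge_add_one_self[of y] by linarith

lemma exp_ge_sq: "0 \<le> (y::real) \<Longrightarrow> y ^ 2 \<le> 4 * exp y"
proof -
  assume y: "0 \<le> y"
  have "y / 2 \<le> exp (y / 2)" using exp_ge_lin[of "y/2"] y by simp
  hence "(y / 2) ^ 2 \<le> exp (y / 2) ^ 2" using y by (intro power_mono) auto
  also have "exp (y / 2) ^ 2 = exp y" by (simp add: power2_eq_square flip: exp_add)
  finally show ?thesis by (simp add: power_divide)
qed

lemma exp_taylor2: "\<bar>exp (u::real) - 1 - u\<bar> \<le> u ^ 2 * exp \<bar>u\<bar>"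
proof -
  obtain th where th: "\<bar>th\<bar> \<le> \<bar>u\<bar>" "exp u = (\<Sum>m<2. u ^ m / fact m) + exp th / fact 2 * u ^ 2"
    using Maclaurin_exp_le[of u 2] by blast
  have s: "(\<Sum>m<2. u ^ m / fact m) = 1 + u" by (simp add: eval_nat_numeral)
  have f2: "(fact 2 :: real) = 2" by (simp add: eval_nat_numeral)
  have h: "exp u - 1 - u = exp th / 2 * u ^ 2" using th(2) unfolding s f2 by linarith
  have p: "exp th / 2 * u ^ 2 \<ge> 0" by simp
  have "\<bar>exp u - 1 - u\<bar> = exp th / 2 * u ^ 2" unfolding h using p by linarith
  also have "\<dots> \<le> exp \<bar>u\<bar> * u ^ 2"
  proof -
    have "exp th \<le> exp \<bar>u\<bar>" using th(1) by simp
    moreover have "exp th > 0" by simp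
    ultimately have "exp th / 2 \<le> exp \<bar>u\<bar>" by linarith
    thus ?thesis by (intro mult_right_mono) auto
  qed
  finally show ?thesis by (simp add: mult.commute)
qed

lemma abs_add_le_max: "\<bar>a\<bar> + \<bar>b\<bar> = max \<bar>a + b\<bar> \<bar>a - (b::real)\<bar>"
  by (auto simp: abs_if max_def)

context mx1 begin

definition r0 :: real where "r0 = 1 / Cc"

lemma r0_pos: "r0 > 0" unfolding r0_def using Cc_ge by simp

lemma EI: "nt t < r0 \<Longrightarrow> integrable M (\<lambda>\<omega>. exp \<bar>tX X t \<omega>\<bar>)"
  by (rule exp_abs_int) (use Cc_ge in \<open>auto simp: r0_def field_simps\<close>)

lemma tX_meas[measurable]: "tX X t \<in> borel_measurable M"
  by (rule RP_meas[OF tX_RP])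

declare Xmeas[measurable]

lemma shift_tX: "tX X (\<lambda>j. t j + (if j = k then c else 0)) \<omega> = tX X t \<omega> + c * X k \<omega>"
proof -
  have e: "(\<lambda>j. (if j = k then c else 0) * X j \<omega>) = (\<lambda>j. if j = k then c * X k \<omega> else 0)" by auto
  show ?thesis unfolding tX_def distrib_right sum.distrib e by simp
qed

lemma shift_nt: "nt (\<lambda>j. t j + (if j = k then c else 0)) \<le> nt t + \<bar>c\<bar>"
proof -
  have "nt (\<lambda>j. t j + (if j = k then c else 0)) \<le> (\<Sum>j\<in>UNIV. \<bar>t j\<bar> + \<bar>if j = k then c else 0\<bar>)"
    unfolding nt_def by (rule sum_mono) (rule abs_triangle_ineq)
  also have "\<dots> = nt t + \<bar>c\<bar>"
  proof -
    have e: "(\<lambda>j. \<bar>if j = k then c else 0\<bar>) = (\<lambda>j. if j = k then \<bar>c\<bar> else 0)" by auto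
    show ?thesis unfolding nt_def sum.distrib e by simp
  qed
  finally show ?thesis .
qed

lemma EI2:
  assumes t: "nt t < r0 / 2" and c: "\<bar>c\<bar> \<le> r0 / 4"
  shows "integrable M (\<lambda>\<omega>. exp (\<bar>tX X t \<omega>\<bar> + \<bar>c\<bar> * \<bar>X k \<omega>\<bar>))"
proof -
  have i1: "integrable M (\<lambda>\<omega>. exp \<bar>tX X (\<lambda>j. t j + (if j = k then c else 0)) \<omega>\<bar>)"
    by (rule EI) (use shift_nt[of t k c] t c r0_pos in auto)
  have i2: "integrable M (\<lambda>\<omega>. exp \<bar>tX X (\<lambda>j. t j + (if j = k then -c else 0)) \<omega>\<bar>)"
    by (rule EI) (use shift_nt[of t k "-c"] t c r0_pos in auto)
  have i: "integrable M (\<lambda>\<omega>. exp \<bar>tX X t \<omega> + c * X k \<omega>\<bar> + exp \<bar>tX X t \<omega> - c * X k \<omega>\<bar>)"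
    using Bochner_Integration.integrable_add[OF i1 i2] by (simp add: shift_tX)
  show ?thesis
  proof (rule Bochner_Integration.integrable_bound[OF i])
    show "(\<lambda>\<omega>. exp (\<bar>tX X t \<omega>\<bar> + \<bar>c\<bar> * \<bar>X k \<omega>\<bar>)) \<in> borel_measurable M" by measurable
    show "AE \<omega> in M. norm (exp (\<bar>tX X t \<omega>\<bar> + \<bar>c\<bar> * \<bar>X k \<omega>\<bar>)) \<le> norm (exp \<bar>tX X t \<omega> + c * X k \<omega>\<bar> + exp \<bar>tX X t \<omega> - c * X k \<omega>\<bar>)"
    proof (intro AE_I2)
      fix \<omega>
      have e: "\<bar>tX X t \<omega>\<bar> + \<bar>c\<bar> * \<bar>X k \<omega>\<bar> = max \<bar>tX X t \<omega> + c * X k \<omega>\<bar> \<bar>tX X t \<omega> - c * X k \<omega>\<bar>"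
        using abs_add_le_max[of "tX X t \<omega>" "c * X k \<omega>"] by (simp add: abs_mult)
      have p: "exp \<bar>tX X t \<omega> + c * X k \<omega>\<bar> > 0" "exp \<bar>tX X t \<omega> - c * X k \<omega>\<bar> > 0" by auto
      show "norm (exp (\<bar>tX X t \<omega>\<bar> + \<bar>c\<bar> * \<bar>X k \<omega>\<bar>)) \<le> norm (exp \<bar>tX X t \<omega> + c * X k \<omega>\<bar> + exp \<bar>tX X t \<omega> - c * X k \<omega>\<bar>)"
        unfolding e using p by (auto simp: max_def)
    qed
  qed
qed

lemma Xexp_int:
  assumes t: "nt t < r0 / 2"
  shows "integrable M (\<lambda>\<omega>. \<bar>X k \<omega>\<bar> * exp \<bar>tX X t \<omega>\<bar>)"
proof -
  define d where "d = r0 / 4"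
  have d: "d > 0" "\<bar>d\<bar> \<le> r0 / 4" using r0_pos by (auto simp: d_def)
  have i: "integrable M (\<lambda>\<omega>. (1 / d) * exp (\<bar>tX X t \<omega>\<bar> + \<bar>d\<bar> * \<bar>X k \<omega>\<bar>))"
    by (rule integrable_mult_right) (rule EI2[OF t d(2)])
  show ?thesis
  proof (rule Bochner_Integration.integrable_bound[OF i])
    show "(\<lambda>\<omega>. \<bar>X k \<omega>\<bar> * exp \<bar>tX X t \<omega>\<bar>) \<in> borel_measurable M" by measurable
    show "AE \<omega> in M. norm (\<bar>X k \<omega>\<bar> * exp \<bar>tX X t \<omega>\<bar>) \<le> norm ((1 / d) * exp (\<bar>tX X t \<omega>\<bar> + \<bar>d\<bar> * \<bar>X k \<omega>\<bar>))"
    proof (intro AE_I2)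
      fix \<omega>
      have "d * \<bar>X k \<omega>\<bar> \<le> exp (d * \<bar>X k \<omega>\<bar>)" using d by (intro exp_ge_lin) auto
      hence "\<bar>X k \<omega>\<bar> \<le> (1 / d) * exp (d * \<bar>X k \<omega>\<bar>)" using d by (simp add: field_simps)
      hence "\<bar>X k \<omega>\<bar> * exp \<bar>tX X t \<omega>\<bar> \<le> (1 / d) * exp (d * \<bar>X k \<omega>\<bar>) * exp \<bar>tX X t \<omega>\<bar>"
        by (intro mult_right_mono) auto
      also have "\<dots> = (1 / d) * exp (\<bar>tX X t \<omega>\<bar> + \<bar>d\<bar> * \<bar>X k \<omega>\<bar>)" using d by (simp add: exp_add)
      finally show "norm (\<bar>X k \<omega>\<bar> * exp \<bar>tX X t \<omega>\<bar>) \<le> norm ((1 / d) * exp (\<bar>tX X t \<omega>\<bar> + \<bar>d\<bar> * \<bar>X k \<omega>\<bar>))"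
        using d by simp
    qed
  qed
qed

lemma X2exp_int:
  assumes t: "nt t < r0 / 2"
  shows "integrable M (\<lambda>\<omega>. X k \<omega> ^ 2 * exp (\<bar>tX X t \<omega>\<bar> + (r0 / 8) * \<bar>X k \<omega>\<bar>))"
proof -
  define d where "d = r0 / 8"
  have d: "d > 0" "\<bar>2 * d\<bar> \<le> r0 / 4" using r0_pos by (auto simp: d_def)
  have i: "integrable M (\<lambda>\<omega>. (4 / d ^ 2) * exp (\<bar>tX X t \<omega>\<bar> + \<bar>2 * d\<bar> * \<bar>X k \<omega>\<bar>))"
    by (rule integrable_mult_right) (rule EI2[OF t d(2)])
  show ?thesis unfolding d_def[symmetric]
  proof (rule Bochner_Integration.integrable_bound[OF i])
    show "(\<lambda>\<omega>. X k \<omega> ^ 2 * exp (\<bar>tX X t \<omega>\<bar> + d * \<bar>X k \<omega>\<bar>)) \<in> borel_measurable M" by measurable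
    show "AE \<omega> in M. norm (X k \<omega> ^ 2 * exp (\<bar>tX X t \<omega>\<bar> + d * \<bar>X k \<omega>\<bar>)) \<le> norm ((4 / d ^ 2) * exp (\<bar>tX X t \<omega>\<bar> + \<bar>2 * d\<bar> * \<bar>X k \<omega>\<bar>))"
    proof (intro AE_I2)
      fix \<omega>
      have "(d * \<bar>X k \<omega>\<bar>) ^ 2 \<le> 4 * exp (d * \<bar>X k \<omega>\<bar>)" using d by (intro exp_ge_sq) auto
      hence "X k \<omega> ^ 2 \<le> (4 / d ^ 2) * exp (d * \<bar>X k \<omega>\<bar>)" using d by (simp add: field_simps power_mult_distrib)
      hence "X k \<omega> ^ 2 * exp (\<bar>tX X t \<omega>\<bar> + d * \<bar>X k \<omega>\<bar>) \<le> (4 / d ^ 2) * exp (d * \<bar>X k \<omega>\<bar>) * exp (\<bar>tX X t \<omega>\<bar> + d * \<bar>X k \<omega>\<bar>)"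
        by (intro mult_right_mono) auto
      also have "\<dots> = (4 / d ^ 2) * exp (\<bar>tX X t \<omega>\<bar> + \<bar>2 * d\<bar> * \<bar>X k \<omega>\<bar>)"
        using d by (simp add: mult.assoc flip: exp_add)
      finally show "norm (X k \<omega> ^ 2 * exp (\<bar>tX X t \<omega>\<bar> + d * \<bar>X k \<omega>\<bar>)) \<le> norm ((4 / d ^ 2) * exp (\<bar>tX X t \<omega>\<bar> + \<bar>2 * d\<bar> * \<bar>X k \<omega>\<bar>))"
        by simp
    qed
  qed
qed

end


context mx1 begin

lemma exp_int0: "nt t < r0 / 2 \<Longrightarrow> integrable M (\<lambda>\<omega>. exp (tX X t \<omega>))"
proof -
  assume t: "nt t < r0 / 2"
  have i: "integrable M (\<lambda>\<omega>. exp \<bar>tX X t \<omega>\<bar>)" by (rule EI) (use t r0_pos in auto)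
  show ?thesis
    by (rule Bochner_Integration.integrable_bound[OF i]) (auto intro!: AE_I2)
qed

lemma Xexp_int': "nt t < r0 / 2 \<Longrightarrow> integrable M (\<lambda>\<omega>. X k \<omega> * exp (tX X t \<omega>))"
proof -
  assume t: "nt t < r0 / 2"
  show ?thesis
  proof (rule Bochner_Integration.integrable_bound[OF Xexp_int[OF t, of k]])
    show "(\<lambda>\<omega>. X k \<omega> * exp (tX X t \<omega>)) \<in> borel_measurable M" by measurable
    show "AE \<omega> in M. norm (X k \<omega> * exp (tX X t \<omega>)) \<le> norm (\<bar>X k \<omega>\<bar> * exp \<bar>tX X t \<omega>\<bar>)"
    proof (intro AE_I2)
      fix \<omega>
      have "exp (tX X t \<omega>) \<le> exp \<bar>tX X t \<omega>\<bar>" by simp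
      hence "\<bar>X k \<omega>\<bar> * exp (tX X t \<omega>) \<le> \<bar>X k \<omega>\<bar> * exp \<bar>tX X t \<omega>\<bar>" by (rule mult_left_mono) simp
      thus "norm (X k \<omega> * exp (tX X t \<omega>)) \<le> norm (\<bar>X k \<omega>\<bar> * exp \<bar>tX X t \<omega>\<bar>)" by (simp add: abs_mult)
    qed
  qed
qed

lemma exp_int_s: "nt t < r0 / 2 \<Longrightarrow> \<bar>s\<bar> \<le> r0 / 4 \<Longrightarrow> integrable M (\<lambda>\<omega>. exp (tX X t \<omega> + s * X i \<omega>))"
proof -
  assume t: "nt t < r0 / 2" and s: "\<bar>s\<bar> \<le> r0 / 4"
  show ?thesis
  proof (rule Bochner_Integration.integrable_bound[OF EI2[OF t s, of i]])
    show "(\<lambda>\<omega>. exp (tX X t \<omega> + s * X i \<omega>)) \<in> borel_measurable M" by measurable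
    show "AE \<omega> in M. norm (exp (tX X t \<omega> + s * X i \<omega>)) \<le> norm (exp (\<bar>tX X t \<omega>\<bar> + \<bar>s\<bar> * \<bar>X i \<omega>\<bar>))"
    proof (intro AE_I2)
      fix \<omega>
      have "s * X i \<omega> \<le> \<bar>s\<bar> * \<bar>X i \<omega>\<bar>" by (metis abs_ge_self abs_mult)
      moreover have "tX X t \<omega> \<le> \<bar>tX X t \<omega>\<bar>" by (rule abs_ge_self)
      ultimately have "tX X t \<omega> + s * X i \<omega> \<le> \<bar>tX X t \<omega>\<bar> + \<bar>s\<bar> * \<bar>X i \<omega>\<bar>" by linarith
      thus "norm (exp (tX X t \<omega> + s * X i \<omega>)) \<le> norm (exp (\<bar>tX X t \<omega>\<bar> + \<bar>s\<bar> * \<bar>X i \<omega>\<bar>))" by simp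
    qed
  qed
qed

lemma deriv_lap:
  assumes t: "nt t < r0 / 2"
  shows "((\<lambda>s. integral\<^sup>L M (\<lambda>\<omega>. exp (tX X t \<omega> + s * X i \<omega>))) has_real_derivative
           integral\<^sup>L M (\<lambda>\<omega>. X i \<omega> * exp (tX X t \<omega>))) (at 0)"
proof -
  define g where "g = (\<lambda>s. integral\<^sup>L M (\<lambda>\<omega>. exp (tX X t \<omega> + s * X i \<omega>)))"
  define D where "D = integral\<^sup>L M (\<lambda>\<omega>. X i \<omega> * exp (tX X t \<omega>))"
  define d where "d = r0 / 8"
  define W where "W = (\<lambda>\<omega>. X i \<omega> ^ 2 * exp (\<bar>tX X t \<omega>\<bar> + d * \<bar>X i \<omega>\<bar>))"
  define K where "K = integral\<^sup>L M W"
  have d: "d > 0" "d \<le> r0 / 4" using r0_pos by (auto simp: d_def)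
  have iW: "integrable M W" unfolding W_def d_def by (rule X2exp_int[OF t])
  have K0: "K \<ge> 0" unfolding K_def W_def by (rule Bochner_Integration.integral_nonneg) auto
  have i0: "integrable M (\<lambda>\<omega>. exp (tX X t \<omega>))" by (rule exp_int0[OF t])
  have iD: "integrable M (\<lambda>\<omega>. X i \<omega> * exp (tX X t \<omega>))" by (rule Xexp_int'[OF t])
  have key: "\<bar>g s - g 0 - s * D\<bar> \<le> s ^ 2 * K" if s: "\<bar>s\<bar> \<le> d" for s
  proof -
    have iS: "integrable M (\<lambda>\<omega>. exp (tX X t \<omega> + s * X i \<omega>))"
      by (rule exp_int_s[OF t]) (use s d in auto)
    have iF: "integrable M (\<lambda>\<omega>. exp (tX X t \<omega> + s * X i \<omega>) - exp (tX X t \<omega>) - s * (X i \<omega> * exp (tX X t \<omega>)))"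
      by (rule Bochner_Integration.integrable_diff[OF Bochner_Integration.integrable_diff[OF iS i0] integrable_mult_right[OF iD]])
    have gI: "g s - g 0 - s * D = integral\<^sup>L M (\<lambda>\<omega>. exp (tX X t \<omega> + s * X i \<omega>) - exp (tX X t \<omega>) - s * (X i \<omega> * exp (tX X t \<omega>)))"
    proof -
      have 1: "integral\<^sup>L M (\<lambda>\<omega>. exp (tX X t \<omega> + s * X i \<omega>) - exp (tX X t \<omega>) - s * (X i \<omega> * exp (tX X t \<omega>)))
        = integral\<^sup>L M (\<lambda>\<omega>. exp (tX X t \<omega> + s * X i \<omega>) - exp (tX X t \<omega>)) - integral\<^sup>L M (\<lambda>\<omega>. s * (X i \<omega> * exp (tX X t \<omega>)))"
        by (rule Bochner_Integration.integral_diff[OF Bochner_Integration.integrable_diff[OF iS i0] integrable_mult_right[OF iD]])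
      have 2: "integral\<^sup>L M (\<lambda>\<omega>. exp (tX X t \<omega> + s * X i \<omega>) - exp (tX X t \<omega>)) = g s - g 0"
        unfolding g_def by (simp only: Bochner_Integration.integral_diff[OF iS i0]) simp
      have 3: "integral\<^sup>L M (\<lambda>\<omega>. s * (X i \<omega> * exp (tX X t \<omega>))) = s * D"
        unfolding D_def by (rule integral_mult_right_zero)
      show ?thesis unfolding 1 2 3 by (rule refl)
    qed
    have "\<bar>g s - g 0 - s * D\<bar> \<le> integral\<^sup>L M (\<lambda>\<omega>. norm (exp (tX X t \<omega> + s * X i \<omega>) - exp (tX X t \<omega>) - s * (X i \<omega> * exp (tX X t \<omega>))))"
      using integral_norm_bound[of M "\<lambda>\<omega>. exp (tX X t \<omega> + s * X i \<omega>) - exp (tX X t \<omega>) - s * (X i \<omega> * exp (tX X t \<omega>))"]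
      unfolding gI by simp
    also have "\<dots> \<le> integral\<^sup>L M (\<lambda>\<omega>. s ^ 2 * W \<omega>)"
    proof (rule integral_mono)
      show "integrable M (\<lambda>\<omega>. norm (exp (tX X t \<omega> + s * X i \<omega>) - exp (tX X t \<omega>) - s * (X i \<omega> * exp (tX X t \<omega>))))"
        using iF by (rule integrable_norm)
      show "integrable M (\<lambda>\<omega>. s ^ 2 * W \<omega>)" using iW by simp
      fix \<omega>
      define a where "a = tX X t \<omega>"
      define x where "x = X i \<omega>"
      have e1: "exp (a + s * x) - exp a - s * (x * exp a) = exp a * (exp (s * x) - 1 - s * x)"
        by (simp add: exp_add right_diff_distrib mult_ac)
      have "norm (exp (a + s * x) - exp a - s * (x * exp a)) = exp a * \<bar>exp (s * x) - 1 - s * x\<bar>"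
        unfolding e1 real_norm_def abs_mult by simp
      also have "\<dots> \<le> exp a * ((s * x) ^ 2 * exp \<bar>s * x\<bar>)"
        by (intro mult_left_mono exp_taylor2) auto
      also have "\<dots> \<le> exp \<bar>a\<bar> * ((s * x) ^ 2 * exp (d * \<bar>x\<bar>))"
      proof -
        have h1: "exp a \<le> exp \<bar>a\<bar>" by simp
        have "\<bar>s * x\<bar> \<le> d * \<bar>x\<bar>" using s by (simp add: abs_mult mult_right_mono)
        hence "exp \<bar>s * x\<bar> \<le> exp (d * \<bar>x\<bar>)" by simp
        hence h2: "(s * x) ^ 2 * exp \<bar>s * x\<bar> \<le> (s * x) ^ 2 * exp (d * \<bar>x\<bar>)"
          by (rule mult_left_mono) simp
        show ?thesis by (rule mult_mono[OF h1 h2]) simp_all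
      qed
      also have "\<dots> = s ^ 2 * (x ^ 2 * exp (\<bar>a\<bar> + d * \<bar>x\<bar>))"
        by (simp add: exp_add power_mult_distrib mult_ac)
      finally show "norm (exp (tX X t \<omega> + s * X i \<omega>) - exp (tX X t \<omega>) - s * (X i \<omega> * exp (tX X t \<omega>))) \<le> s ^ 2 * W \<omega>"
        unfolding W_def a_def x_def .
    qed
    also have "\<dots> = s ^ 2 * K" unfolding K_def by simp
    finally show ?thesis .
  qed
  have "((\<lambda>h. (g (0 + h) - g 0) / h) \<longlongrightarrow> D) (at 0)"
  proof (rule LIM_I)
    fix r :: real assume r: "r > 0"
    define e where "e = min d (r / (K + 1))"
    have e: "e > 0" using d r K0 by (simp add: e_def)
    show "\<exists>s>0. \<forall>h. h \<noteq> 0 \<and> norm (h - 0) < s \<longrightarrow> norm ((g (0 + h) - g 0) / h - D) < r"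
    proof (intro exI[of _ e] conjI allI impI)
      show "e > 0" by (rule e)
      fix h :: real assume h: "h \<noteq> 0 \<and> norm (h - 0) < e"
      have hd: "\<bar>h\<bar> \<le> d" using h by (simp add: e_def)
      have hr: "\<bar>h\<bar> < r / (K + 1)" using h by (simp add: e_def)
      have "(g h - g 0) / h - D = (g h - g 0 - h * D) / h" using h by (simp add: field_simps)
      hence "norm ((g (0 + h) - g 0) / h - D) = \<bar>g h - g 0 - h * D\<bar> / \<bar>h\<bar>" by simp
      also have "\<dots> \<le> h ^ 2 * K / \<bar>h\<bar>" by (intro divide_right_mono key hd) simp
      also have "\<dots> = \<bar>h\<bar> * K"
      proof -
        have e: "h ^ 2 = \<bar>h\<bar> * \<bar>h\<bar>" by (metis abs_mult_self_eq power2_eq_square)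
        have hne: "\<bar>h\<bar> \<noteq> 0" using h by simp
        have "h * h * K / \<bar>h\<bar> = \<bar>h\<bar> * K"
        proof (cases "h > 0")
          case True thus ?thesis by (simp add: field_simps)
        next
          case False hence "h < 0" using h by auto
          thus ?thesis by (simp add: field_simps)
        qed
        thus ?thesis by (simp add: power2_eq_square)
      qed
      also have "\<dots> \<le> r / (K + 1) * K" using hr K0 by (intro mult_right_mono) auto
      also have "\<dots> < r" using r K0 by (simp add: field_simps)
      finally show "norm ((g (0 + h) - g 0) / h - D) < r" .
    qed
  qed
  hence "DERIV g 0 :> D" unfolding DERIV_def .
  thus ?thesis unfolding g_def D_def .
qed

end


lemma sum_shift0: "(\<Sum>n<Suc N. a n) = a 0 + (\<Sum>n<N. a (Suc n) :: real)"
  by (induction N) auto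

lemma expsum_bound: "\<bar>\<Sum>n<N. (y::real) ^ n / fact n\<bar> \<le> exp \<bar>y\<bar>"
proof -
  have "\<bar>\<Sum>n<N. y ^ n / fact n\<bar> \<le> (\<Sum>n<N. \<bar>y\<bar> ^ n / fact n)"
    by (rule order_trans[OF sum_abs]) (simp add: power_abs)
  also have "\<dots> \<le> (\<Sum>n. \<bar>y\<bar> ^ n / fact n)"
  proof (rule sum_le_suminf)
    show "summable (\<lambda>n. \<bar>y\<bar> ^ n / fact n)"
      using exp_converges[of "\<bar>y\<bar>"] by (simp add: sums_iff divide_inverse_commute)
  qed auto
  also have "\<dots> = exp \<bar>y\<bar>"
    using exp_converges[of "\<bar>y\<bar>"] by (simp add: sums_iff divide_inverse_commute)
  finally show ?thesis .
qed

lemma expsum_lim: "(\<lambda>N. \<Sum>n<N. (y::real) ^ n / fact n) \<longlonglongrightarrow> exp y"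
  using exp_converges[of y] by (simp add: sums_def divide_inverse_commute)

context mx1 begin

lemma Lt_RP: "Lt X \<alpha> \<beta> i t \<in> RP X"
  unfolding Lt_def by (intro RP_sum RP_scale Lf_RP) auto

lemma Lt_meas[measurable]: "Lt X \<alpha> \<beta> i t \<in> borel_measurable M"
  by (rule RP_meas[OF Lt_RP])

lemma pde_int:
  assumes t: "nt t < r0 / 2"
  shows "integral\<^sup>L M (\<lambda>\<omega>. X i \<omega> * exp (tX X t \<omega>)) = integral\<^sup>L M (\<lambda>\<omega>. Lt X \<alpha> \<beta> i t \<omega> * exp (tX X t \<omega>))"
proof -
  define y where "y = tX X t"
  define L where "L = Lt X \<alpha> \<beta> i t"
  define E where "E = (\<lambda>N \<omega>. \<Sum>n<N. y \<omega> ^ n / fact n)"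
  define a where "a = (\<lambda>n. integral\<^sup>L M (\<lambda>\<omega>. X i \<omega> * y \<omega> ^ n) / fact n)"
  define b where "b = (\<lambda>n. integral\<^sup>L M (\<lambda>\<omega>. L \<omega> * y \<omega> ^ n) / fact n)"
  have yR: "y \<in> RP X" unfolding y_def by (rule tX_RP)
  have LR: "L \<in> RP X" unfolding L_def by (rule Lt_RP)
  have ymeas[measurable]: "y \<in> borel_measurable M" unfolding y_def by simp
  have Lmeas[measurable]: "L \<in> borel_measurable M" unfolding L_def by simp
  have ab: "a (Suc n) = b n" for n
  proof -
    have "integral\<^sup>L M (\<lambda>\<omega>. X i \<omega> * y \<omega> ^ Suc n) = integral\<^sup>L M (\<lambda>\<omega>. real (Suc n) * (L \<omega> * y \<omega> ^ n))"
      using E_Xpow[of i t "Suc n"] unfolding y_def L_def by (simp add: mult_ac)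
    also have "\<dots> = real (Suc n) * integral\<^sup>L M (\<lambda>\<omega>. L \<omega> * y \<omega> ^ n)" by (rule integral_mult_right_zero)
    finally have h: "integral\<^sup>L M (\<lambda>\<omega>. X i \<omega> * y \<omega> ^ Suc n) = real (Suc n) * integral\<^sup>L M (\<lambda>\<omega>. L \<omega> * y \<omega> ^ n)" .
    have "a (Suc n) = (real (Suc n) * integral\<^sup>L M (\<lambda>\<omega>. L \<omega> * y \<omega> ^ n)) / (real (Suc n) * fact n)"
      unfolding a_def h fact_Suc ..
    also have "\<dots> = integral\<^sup>L M (\<lambda>\<omega>. L \<omega> * y \<omega> ^ n) / fact n"
      by (rule mult_divide_mult_cancel_left) simp
    finally show ?thesis unfolding b_def .
  qed
  have a0: "a 0 = 0" unfolding a_def using mean0[of i] by simp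
  have iXy: "integrable M (\<lambda>\<omega>. X i \<omega> * y \<omega> ^ n / fact n)" for n
    by (intro integrable_divide_zero RP_int RPmul RPX RP_power yR)
  have iLy: "integrable M (\<lambda>\<omega>. L \<omega> * y \<omega> ^ n / fact n)" for n
    by (intro integrable_divide_zero RP_int RPmul LR RP_power yR)
  have IA: "integral\<^sup>L M (\<lambda>\<omega>. X i \<omega> * E N \<omega>) = (\<Sum>n<N. a n)" for N
  proof -
    have "(\<lambda>\<omega>. X i \<omega> * E N \<omega>) = (\<lambda>\<omega>. \<Sum>n<N. X i \<omega> * y \<omega> ^ n / fact n)"
      unfolding E_def by (simp add: sum_distrib_left)
    hence "integral\<^sup>L M (\<lambda>\<omega>. X i \<omega> * E N \<omega>) = (\<Sum>n<N. integral\<^sup>L M (\<lambda>\<omega>. X i \<omega> * y \<omega> ^ n / fact n))"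
      using iXy by (simp add: Bochner_Integration.integral_sum)
    thus ?thesis unfolding a_def by simp
  qed
  have IB: "integral\<^sup>L M (\<lambda>\<omega>. L \<omega> * E N \<omega>) = (\<Sum>n<N. b n)" for N
  proof -
    have "(\<lambda>\<omega>. L \<omega> * E N \<omega>) = (\<lambda>\<omega>. \<Sum>n<N. L \<omega> * y \<omega> ^ n / fact n)"
      unfolding E_def by (simp add: sum_distrib_left)
    hence "integral\<^sup>L M (\<lambda>\<omega>. L \<omega> * E N \<omega>) = (\<Sum>n<N. integral\<^sup>L M (\<lambda>\<omega>. L \<omega> * y \<omega> ^ n / fact n))"
      using iLy by (simp add: Bochner_Integration.integral_sum)
    thus ?thesis unfolding b_def by simp
  qed
  have seq_eq: "integral\<^sup>L M (\<lambda>\<omega>. X i \<omega> * E (Suc N) \<omega>) = integral\<^sup>L M (\<lambda>\<omega>. L \<omega> * E N \<omega>)" for N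
    unfolding IA IB sum_shift0 a0 ab by simp
  have Emeas[measurable]: "(\<lambda>\<omega>. E N \<omega>) \<in> borel_measurable M" for N unfolding E_def by measurable
  have Ebound: "\<bar>E N \<omega>\<bar> \<le> exp \<bar>y \<omega>\<bar>" for N \<omega> unfolding E_def by (rule expsum_bound)
  have Elim: "(\<lambda>N. E N \<omega>) \<longlonglongrightarrow> exp (y \<omega>)" for \<omega> unfolding E_def by (rule expsum_lim)
  have wA: "integrable M (\<lambda>\<omega>. \<bar>X i \<omega>\<bar> * exp \<bar>y \<omega>\<bar>)" unfolding y_def by (rule Xexp_int[OF t])
  define \<gamma> where "\<gamma> = (\<lambda>k. \<Sum>j\<in>UNIV. t j * \<alpha> i j k)"
  have Leq: "L \<omega> = (\<Sum>k\<in>UNIV. \<gamma> k * X k \<omega>) + t i" for \<omega> unfolding L_def \<gamma>_def by (rule Lt_eq)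
  define w where "w = (\<lambda>\<omega>. (\<Sum>k\<in>UNIV. \<bar>\<gamma> k\<bar> * (\<bar>X k \<omega>\<bar> * exp \<bar>y \<omega>\<bar>)) + \<bar>t i\<bar> * exp \<bar>y \<omega>\<bar>)"
  have wB: "integrable M w"
  proof -
    have "integrable M (\<lambda>\<omega>. exp \<bar>y \<omega>\<bar>)" unfolding y_def by (rule EI) (use t r0_pos in auto)
    moreover have "integrable M (\<lambda>\<omega>. \<bar>X k \<omega>\<bar> * exp \<bar>y \<omega>\<bar>)" for k unfolding y_def by (rule Xexp_int[OF t])
    ultimately show ?thesis unfolding w_def by (intro Bochner_Integration.integrable_add Bochner_Integration.integrable_sum integrable_mult_right) auto
  qed
  have Lw: "\<bar>L \<omega>\<bar> * exp \<bar>y \<omega>\<bar> \<le> w \<omega>" for \<omega>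
  proof -
    have "\<bar>L \<omega>\<bar> \<le> (\<Sum>k\<in>UNIV. \<bar>\<gamma> k\<bar> * \<bar>X k \<omega>\<bar>) + \<bar>t i\<bar>"
      unfolding Leq by (rule order_trans[OF abs_triangle_ineq add_right_mono[OF order_trans[OF sum_abs]]]) (simp add: abs_mult)
    hence "\<bar>L \<omega>\<bar> * exp \<bar>y \<omega>\<bar> \<le> ((\<Sum>k\<in>UNIV. \<bar>\<gamma> k\<bar> * \<bar>X k \<omega>\<bar>) + \<bar>t i\<bar>) * exp \<bar>y \<omega>\<bar>"
      by (rule mult_right_mono) simp
    thus ?thesis unfolding w_def by (simp add: distrib_right sum_distrib_right mult.assoc)
  qed
  have limA: "(\<lambda>N. integral\<^sup>L M (\<lambda>\<omega>. X i \<omega> * E (Suc N) \<omega>)) \<longlonglongrightarrow> integral\<^sup>L M (\<lambda>\<omega>. X i \<omega> * exp (y \<omega>))"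
  proof (rule integral_dominated_convergence[where w="\<lambda>\<omega>. \<bar>X i \<omega>\<bar> * exp \<bar>y \<omega>\<bar>"])
    show "(\<lambda>\<omega>. X i \<omega> * exp (y \<omega>)) \<in> borel_measurable M" by measurable
    show "(\<lambda>\<omega>. X i \<omega> * E (Suc N) \<omega>) \<in> borel_measurable M" for N by measurable
    show "integrable M (\<lambda>\<omega>. \<bar>X i \<omega>\<bar> * exp \<bar>y \<omega>\<bar>)" by (rule wA)
    show "AE \<omega> in M. (\<lambda>N. X i \<omega> * E (Suc N) \<omega>) \<longlonglongrightarrow> X i \<omega> * exp (y \<omega>)"
      by (intro AE_I2 tendsto_mult_left) (rule LIMSEQ_Suc[OF Elim])
    show "AE \<omega> in M. norm (X i \<omega> * E (Suc N) \<omega>) \<le> \<bar>X i \<omega>\<bar> * exp \<bar>y \<omega>\<bar>" for N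
      by (intro AE_I2) (simp add: abs_mult mult_left_mono Ebound)
  qed
  have limB: "(\<lambda>N. integral\<^sup>L M (\<lambda>\<omega>. L \<omega> * E N \<omega>)) \<longlonglongrightarrow> integral\<^sup>L M (\<lambda>\<omega>. L \<omega> * exp (y \<omega>))"
  proof (rule integral_dominated_convergence[where w=w])
    show "(\<lambda>\<omega>. L \<omega> * exp (y \<omega>)) \<in> borel_measurable M" by measurable
    show "(\<lambda>\<omega>. L \<omega> * E N \<omega>) \<in> borel_measurable M" for N by measurable
    show "integrable M w" by (rule wB)
    show "AE \<omega> in M. (\<lambda>N. L \<omega> * E N \<omega>) \<longlonglongrightarrow> L \<omega> * exp (y \<omega>)"
      by (intro AE_I2 tendsto_mult_left) (rule Elim)
    show "AE \<omega> in M. norm (L \<omega> * E N \<omega>) \<le> w \<omega>" for N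
    proof (intro AE_I2)
      fix \<omega>
      have "\<bar>L \<omega> * E N \<omega>\<bar> \<le> \<bar>L \<omega>\<bar> * exp \<bar>y \<omega>\<bar>" by (simp add: abs_mult mult_left_mono Ebound)
      thus "norm (L \<omega> * E N \<omega>) \<le> w \<omega>" using Lw[of \<omega>] by simp
    qed
  qed
  have "integral\<^sup>L M (\<lambda>\<omega>. X i \<omega> * exp (y \<omega>)) = integral\<^sup>L M (\<lambda>\<omega>. L \<omega> * exp (y \<omega>))"
    using limA limB unfolding seq_eq by (rule LIMSEQ_unique)
  thus ?thesis unfolding y_def L_def .
qed

lemma pde_final:
  assumes t: "nt t < r0 / 2"
  shows "integral\<^sup>L M (\<lambda>\<omega>. X i \<omega> * exp (tX X t \<omega>)) =
    (\<Sum>j\<in>UNIV. \<Sum>k\<in>UNIV. \<alpha> i j k * t j * integral\<^sup>L M (\<lambda>\<omega>. X k \<omega> * exp (tX X t \<omega>)))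
    + t i * integral\<^sup>L M (\<lambda>\<omega>. exp (tX X t \<omega>))"
proof -
  define \<gamma> where "\<gamma> = (\<lambda>k. \<Sum>j\<in>UNIV. t j * \<alpha> i j k)"
  have iK: "integrable M (\<lambda>\<omega>. X k \<omega> * exp (tX X t \<omega>))" for k by (rule Xexp_int'[OF t])
  have i0: "integrable M (\<lambda>\<omega>. exp (tX X t \<omega>))" by (rule exp_int0[OF t])
  have e: "(\<lambda>\<omega>. Lt X \<alpha> \<beta> i t \<omega> * exp (tX X t \<omega>)) = (\<lambda>\<omega>. (\<Sum>k\<in>UNIV. \<gamma> k * (X k \<omega> * exp (tX X t \<omega>))) + t i * exp (tX X t \<omega>))"
    unfolding Lt_eq \<gamma>_def by (simp add: distrib_right sum_distrib_right mult.assoc)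
  have "integral\<^sup>L M (\<lambda>\<omega>. X i \<omega> * exp (tX X t \<omega>)) = integral\<^sup>L M (\<lambda>\<omega>. Lt X \<alpha> \<beta> i t \<omega> * exp (tX X t \<omega>))"
    by (rule pde_int[OF t])
  also have "\<dots> = (\<Sum>k\<in>UNIV. \<gamma> k * integral\<^sup>L M (\<lambda>\<omega>. X k \<omega> * exp (tX X t \<omega>))) + t i * integral\<^sup>L M (\<lambda>\<omega>. exp (tX X t \<omega>))"
    unfolding e
    by (subst Bochner_Integration.integral_add) (use iK i0 in \<open>auto simp: Bochner_Integration.integral_sum\<close>)
  also have "(\<Sum>k\<in>UNIV. \<gamma> k * integral\<^sup>L M (\<lambda>\<omega>. X k \<omega> * exp (tX X t \<omega>))) =
     (\<Sum>j\<in>UNIV. \<Sum>k\<in>UNIV. \<alpha> i j k * t j * integral\<^sup>L M (\<lambda>\<omega>. X k \<omega> * exp (tX X t \<omega>)))"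
    unfolding \<gamma>_def by (subst sum.swap) (simp add: sum_distrib_right mult_ac)
  finally show ?thesis .
qed

end


lemma axis_comp: "(axis i (1::real) :: real^'d) $ k = (if k = i then 1 else 0)"
  unfolding axis_def by simp

theorem mainTheorem6:
  fixes M :: "'a measure" and X :: "'d::finite \<Rightarrow> 'a \<Rightarrow> real"
    and \<alpha> :: "'d \<Rightarrow> 'd \<Rightarrow> 'd \<Rightarrow> real" and \<beta> :: "'d \<Rightarrow> 'd \<Rightarrow> real"
  assumes "prob_space M"
    and "\<And>i. X i \<in> borel_measurable M"
    and "\<And>i n. integrable M (\<lambda>\<omega>. \<bar>X i \<omega>\<bar> ^ n)"
    and "meixner1 M X \<alpha> \<beta>"
    and "nondegenerate M X"
    and "\<And>k. integral\<^sup>L M (X k) = 0"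
    and "\<And>i j. integral\<^sup>L M (\<lambda>\<omega>. X i \<omega> * X j \<omega>) = (if i = j then 1 else 0)"
  shows "(\<forall>i j. \<beta> i j = (if i = j then 1 else 0)) \<and>
    (\<exists>V. open V \<and> 0 \<in> V \<and> (\<forall>t\<in>V.
       integrable M (\<lambda>\<omega>. exp (\<Sum>k\<in>UNIV. t $ k * X k \<omega>)) \<and>
       (\<forall>i. has_partial (laplace M X) i t) \<and>
       (\<forall>i. partial (laplace M X) i t =
          (\<Sum>j\<in>UNIV. \<Sum>k\<in>UNIV. \<alpha> i j k * t $ j * partial (laplace M X) k t)
          + t $ i * laplace M X t)))"
proof -
  interpret mx1 M X \<alpha> \<beta>
  proof -
    interpret prob_space M by (rule assms(1))
    show "mx1 M X \<alpha> \<beta>"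
      by unfold_locales (use assms in auto)
  qed
  define V where "V = {t :: real^'d. (\<Sum>k\<in>UNIV. \<bar>t $ k\<bar>) < r0 / 2}"
  have openV: "open V" unfolding V_def
    by (intro open_Collect_less continuous_intros)
  have V0: "0 \<in> V" unfolding V_def using r0_pos by simp
  have main: "integrable M (\<lambda>\<omega>. exp (\<Sum>k\<in>UNIV. t $ k * X k \<omega>)) \<and>
       (\<forall>i. has_partial (laplace M X) i t) \<and>
       (\<forall>i. partial (laplace M X) i t =
          (\<Sum>j\<in>UNIV. \<Sum>k\<in>UNIV. \<alpha> i j k * t $ j * partial (laplace M X) k t)
          + t $ i * laplace M X t)" if tV: "t \<in> V" for t
  proof -
    define tt where "tt = (\<lambda>k. t $ k)"
    have nt: "nt tt < r0 / 2" using tV unfolding V_def nt_def tt_def by simp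
    have tXe: "(\<Sum>k\<in>UNIV. t $ k * X k \<omega>) = tX X tt \<omega>" for \<omega> unfolding tX_def tt_def ..
    have lap: "laplace M X t = integral\<^sup>L M (\<lambda>\<omega>. exp (tX X tt \<omega>))"
      unfolding laplace_def tXe ..
    have shift: "(\<lambda>s. laplace M X (t + s *\<^sub>R axis i 1)) = (\<lambda>s. integral\<^sup>L M (\<lambda>\<omega>. exp (tX X tt \<omega> + s * X i \<omega>)))" for i
    proof
      fix s
      have "(\<Sum>k\<in>UNIV. (t + s *\<^sub>R axis i 1) $ k * X k \<omega>) = tX X tt \<omega> + s * X i \<omega>" for \<omega>
      proof -
        have "(\<Sum>k\<in>UNIV. (t + s *\<^sub>R axis i 1) $ k * X k \<omega>) = (\<Sum>k\<in>UNIV. t $ k * X k \<omega> + (if k = i then s * X i \<omega> else 0))"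
          by (rule sum.cong) (auto simp: axis_comp distrib_right)
        also have "\<dots> = tX X tt \<omega> + s * X i \<omega>" unfolding sum.distrib tXe by simp
        finally show ?thesis .
      qed
      thus "laplace M X (t + s *\<^sub>R axis i 1) = integral\<^sup>L M (\<lambda>\<omega>. exp (tX X tt \<omega> + s * X i \<omega>))"
        unfolding laplace_def by simp
    qed
    have D: "((\<lambda>s. laplace M X (t + s *\<^sub>R axis i 1)) has_real_derivative integral\<^sup>L M (\<lambda>\<omega>. X i \<omega> * exp (tX X tt \<omega>))) (at 0)" for i
      unfolding shift by (rule deriv_lap[OF nt])
    have hp: "has_partial (laplace M X) i t" for i
      unfolding has_partial_def by (rule differentiableI[OF has_field_derivative_imp_has_derivative[OF D]])
    have pe: "partial (laplace M X) i t = integral\<^sup>L M (\<lambda>\<omega>. X i \<omega> * exp (tX X tt \<omega>))" for i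
      unfolding partial_def by (rule DERIV_imp_deriv[OF D])
    have int: "integrable M (\<lambda>\<omega>. exp (\<Sum>k\<in>UNIV. t $ k * X k \<omega>))"
      unfolding tXe by (rule exp_int0[OF nt])
    have eq: "partial (laplace M X) i t =
          (\<Sum>j\<in>UNIV. \<Sum>k\<in>UNIV. \<alpha> i j k * t $ j * partial (laplace M X) k t)
          + t $ i * laplace M X t" for i
      unfolding pe lap using pde_final[OF nt, of i] by (simp add: tt_def)
    show ?thesis using int hp eq by blast
  qed
  show ?thesis using beta_delta openV V0 main by blast
qed

end
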